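(* For an integer $m\ge0$ let $\mathbf{S}_m=\{1,\dots,m\}^2$, and let $A_{\mathbf{S}}(m,k)$ be the number of $k$-element subsets of $\mathbf{S}_m$ such that no two distinct elements $(i,j),(i',j')$ satisfy $i=i'$ or $i-j=i'-j'$. For integers $k\ge0$ and $0\le d\le 2k$ define $$c_d(k)=\sum_{i=d}^{2k}\frac{(-1)^{i-d}}{i!}\left[{i\atop d}\right]\sum_{j=0}^{U(i,k)}\alpha(k,j)\sum_{p=L(i,k)}^{k-j}\left\{\!\!\left\{ {p+k-j \atop p}\right\}\!\!\right\}\sum_{b=0}^{j}\binom{p}{b}\binom{k}{j-b}\binom{b}{k+p-i},$$ where $\alpha(k,j)=2^{k-2j}\left[\binom{k-j}{j-1}+\binom{k-j+1}{j}\right]j!$, $U(i,k)=\min(\lceil k/2\rceil,2k-i)$ and $L(i,k)=\max(0,i-k)$. Then for all integers $m,k\ge0$, $A_{\mathbf{S}}(m,k)=\sum_{d=0}^{2k}c_d(k)\,m^d$.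
   Context: $\left[{i\atop d}\right]$ is the unsigned Stirling number of the first kind. $\left\{\!\!\left\{ {n \atop r}\right\}\!\!\right\}$ is the associated Stirling number of the second kind, defined for integers $n,r\ge0$ by $\left\{\!\!\left\{ {n \atop r}\right\}\!\!\right\}=r\left\{\!\!\left\{ {n-1 \atop r}\right\}\!\!\right\}+(n-1)\left\{\!\!\left\{ {n-2 \atop r-1}\right\}\!\!\right\}$ with $\left\{\!\!\left\{ {0 \atop r}\right\}\!\!\right\}=\delta_{r0}$, $\left\{\!\!\left\{ {1 \atop r}\right\}\!\!\right\}=0$, $\left\{\!\!\left\{ {n \atop 0}\right\}\!\!\right\}=\delta_{n0}$ (number of partitions of an $n$-set into $r$ blocks each of size at least 2). Binomial coefficients are extended to all integers (Kronenburg's convention): $\binom{n}{r}=n(n-1)\cdots(n-r+1)/r!$ if $r\ge0$; $\binom{n}{r}=(-1)^{n-r}\binom{-r-1}{n-r}$ if $r\le n<0$; $0$ otherwise (in particular $\binom{n}{r}=0$ for $n\ge0$, $r<0$). *)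

theory Defs
  imports Complex_Main "HOL-Combinatorics.Stirling"
begin

text \<open>Associated Stirling numbers of the second kind (blocks of size at least 2).\<close>
fun assoc_stirling :: "nat \<Rightarrow> nat \<Rightarrow> nat" where
  "assoc_stirling 0 r = (if r = 0 then 1 else 0)"
| "assoc_stirling (Suc 0) r = 0"
| "assoc_stirling (Suc (Suc n)) 0 = 0"
| "assoc_stirling (Suc (Suc n)) (Suc r) =
     Suc r * assoc_stirling (Suc n) (Suc r) + Suc n * assoc_stirling n r"

text \<open>Binomial coefficients extended to all integers (Kronenburg's convention).\<close>
definition kbinom :: "int \<Rightarrow> int \<Rightarrow> real" where
  "kbinom n r =
     (if 0 \<le> r then (real_of_int n) gchoose (nat r)
      else if r \<le> n \<and> n < 0 then (-1) ^ nat (n - r) * ((real_of_int (- r - 1)) gchoose (nat (n - r)))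
      else 0)"

definition S_board :: "nat \<Rightarrow> (int \<times> int) set" where
  "S_board m = {1..int m} \<times> {1..int m}"

definition A_S :: "nat \<Rightarrow> nat \<Rightarrow> nat" where
  "A_S m k = card {T. T \<subseteq> S_board m \<and> card T = k \<and>
     (\<forall>x\<in>T. \<forall>y\<in>T. x \<noteq> y \<longrightarrow>
        \<not> (fst x = fst y \<or> fst x - snd x = fst y - snd y))}"

definition alpha :: "int \<Rightarrow> int \<Rightarrow> real" where
  "alpha k j = 2 powi (k - 2 * j) * (kbinom (k - j) (j - 1) + kbinom (k - j + 1) j) * fact (nat j)"

definition U :: "int \<Rightarrow> int \<Rightarrow> int" where
  "U i k = min (\<lceil>real_of_int k / 2\<rceil>) (2 * k - i)"

definition L :: "int \<Rightarrow> int \<Rightarrow> int" where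
  "L i k = max 0 (i - k)"

definition c_coef :: "int \<Rightarrow> int \<Rightarrow> real" where
  "c_coef d k = (\<Sum>i\<in>{d..2*k}. (-1) ^ nat (i - d) / fact (nat i) * real (stirling (nat i) (nat d)) *
     (\<Sum>j\<in>{0..U i k}. alpha k j *
       (\<Sum>p\<in>{L i k..k - j}. real (assoc_stirling (nat (p + k - j)) (nat p)) *
         (\<Sum>b\<in>{0..j}. kbinom p b * kbinom k (j - b) * kbinom b (k + p - i)))))"

end

theory Submission
  imports Defs
begin

definition ffa :: "nat \<Rightarrow> nat \<Rightarrow> nat" where
  "ffa z j = (z choose j) * fact j"

lemma ffa_0[simp]: "ffa z 0 = 1" by (simp add: ffa_def)

lemma ffa_Suc_Suc: "ffa (Suc z) (Suc j) = ffa z (Suc j) + Suc j * ffa z j"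
  by (simp add: ffa_def algebra_simps)

lemma ffa_shift: "ffa z (Suc j) = (z - j) * ffa z j"
proof -
  have h: "Suc j * (z choose Suc j) = (z - j) * (z choose j)"
    by (metis binomial_absorb_comp binomial_absorption)
  have "ffa z (Suc j) = (Suc j * (z choose Suc j)) * fact j"
    unfolding ffa_def fact_Suc by (simp only: ac_simps of_nat_id)
  also have "\<dots> = (z - j) * ffa z j" unfolding h ffa_def by (simp only: ac_simps)
  finally show ?thesis .
qed

lemma ffa_zero: "z < j \<Longrightarrow> ffa z j = 0" by (simp add: ffa_def)

definition Psi :: "nat \<Rightarrow> int \<Rightarrow> int \<Rightarrow> int" where
  "Psi n N j = (if 0 \<le> N \<and> N \<le> int n \<and> 0 \<le> j then
      int (Stirling n (n - nat N) * ffa (n - nat N) (nat j)) else 0)"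

lemma Psi_0: "Psi 0 N j = (if N = 0 \<and> j = 0 then 1 else 0)"
  by (auto simp: Psi_def ffa_def)

lemma Psi_large: "j > int n \<Longrightarrow> Psi n N j = 0"
  by (auto simp: Psi_def ffa_zero)

lemma Psi_negN: "N < 0 \<Longrightarrow> Psi n N j = 0"
  by (auto simp: Psi_def)

lemma Psi_negj: "j < 0 \<Longrightarrow> Psi n N j = 0"
  by (auto simp: Psi_def)

lemma Psi_bigN: "N > int n \<Longrightarrow> Psi n N j = 0"
  by (auto simp: Psi_def)

lemma Psi_shift: assumes j0: "0 \<le> j" shows "Psi n N (j+1) = (int n - N - j) * Psi n N j"
proof (cases "0 \<le> N \<and> N \<le> int n \<and> 0 \<le> j")
  case True
  then obtain jn where jn: "j = int jn" by (metis nonneg_eq_int)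
  have "nat (j+1) = Suc jn" using jn by simp
  moreover have e: "int (ffa (n - nat N) (Suc jn)) = (int n - N - j) * int (ffa (n - nat N) jn)"
  proof (cases "jn \<le> n - nat N")
    case True
    have "int (n - nat N - jn) = int n - N - j" using True \<open>0 \<le> N \<and> N \<le> int n \<and> 0 \<le> j\<close> jn
      by linarith
    then show ?thesis by (simp add: ffa_shift)
  next
    case False
    then show ?thesis by (simp add: ffa_zero)
  qed
  ultimately show ?thesis using True jn by (simp add: Psi_def mult_ac)
next
  case False
  then show ?thesis using j0
    by (auto simp: Psi_def)
qed

lemma Psi_rec: "Psi (Suc n) N j = Psi n N j + (int n + 1 - N) * Psi n (N-1) j + j * Psi n N (j-1)"
proof (cases "j < 0 \<or> N < 0 \<or> N > int n + 1")
  case True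
  then show ?thesis by (auto simp: Psi_def)
next
  case False
  then have j0: "0 \<le> j" and N0: "0 \<le> N" and Nn: "N \<le> int n + 1" by auto
  obtain jn where jn: "j = int jn" using j0 by (metis nonneg_eq_int)
  have fS: "ffa (Suc z) jn = ffa z jn + jn * ffa z (jn - 1)" for z
    by (cases jn) (simp_all add: ffa_Suc_Suc)
  have jPsi: "j * Psi n N (j-1) = (if jn = 0 then 0 else
      (if N \<le> int n then int (jn * (Stirling n (n - nat N) * ffa (n - nat N) (jn - 1))) else 0))"
    using jn N0 by (auto simp: Psi_def nat_diff_distrib)
  show ?thesis
  proof (cases "N = int n + 1")
    case True
    then show ?thesis using jn by (simp add: Psi_def)
  next
    case False
    then have Nn': "N \<le> int n" using Nn by simp
    show ?thesis
    proof (cases "N = 0")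
      case True
      have "Psi (Suc n) N j = int (ffa (Suc n) jn)" using True jn by (simp add: Psi_def)
      moreover have "Psi n N j = int (ffa n jn)" using True jn by (simp add: Psi_def)
      moreover have "Psi n (N-1) j = 0" using True by (simp add: Psi_def)
      moreover have "j * Psi n N (j-1) = int (jn * ffa n (jn - 1))"
        using jPsi True by simp
      ultimately show ?thesis by (simp add: fS)
    next
      case False
      then have N1: "1 \<le> N" using N0 by simp
      define z where "z = n - nat N"
      have nz: "n - nat (N - 1) = Suc z" using N1 Nn' by (simp add: z_def nat_diff_distrib)
      have nz2: "Suc n - nat N = Suc z" using N1 Nn' by (simp add: z_def)
      have c1: "int n + 1 - N = int (Suc z)" using N1 Nn' by (simp add: z_def)
      have "Psi (Suc n) N j = int (Stirling (Suc n) (Suc z) * ffa (Suc z) jn)"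
        using N1 Nn' jn nz2 by (simp add: Psi_def)
      also have "\<dots> = int (Suc z * Stirling n (Suc z) * ffa (Suc z) jn) + int (Stirling n z * ffa z jn)
          + int (jn * (Stirling n z * ffa z (jn - 1)))"
        by (simp add: fS algebra_simps)
      also have "\<dots> = (int n + 1 - N) * Psi n (N-1) j + Psi n N j + j * Psi n N (j-1)"
      proof -
        have A: "Psi n (N-1) j = int (Stirling n (Suc z) * ffa (Suc z) jn)"
          using N1 Nn' jn nz by (simp add: Psi_def)
        have B: "Psi n N j = int (Stirling n z * ffa z jn)"
          using N1 Nn' jn by (simp add: Psi_def z_def)
        have C: "j * Psi n N (j-1) = int (jn * (Stirling n z * ffa z (jn - 1)))"
          using jPsi Nn' by (simp add: z_def)
        show ?thesis unfolding A B C c1 by (simp add: algebra_simps)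
      qed
      finally show ?thesis by simp
    qed
  qed
qed


fun Wr :: "nat \<Rightarrow> nat \<Rightarrow> int \<Rightarrow> int \<Rightarrow> int" where
  "Wr 0 x a b = (if a = 0 \<and> b = 0 then 1 else 0)"
| "Wr (Suc n) x a b = (if a < 0 \<or> b < 0 then 0 else
     Wr n (Suc x) a b + int x * Wr n x (a-1) b + (int n + 1 - b) * Wr n (Suc x) a (b-1))"

definition om :: "nat \<Rightarrow> int \<Rightarrow> int \<Rightarrow> int \<Rightarrow> int" where
  "om x a b j = (if 0 \<le> b \<and> 0 \<le> j \<and> j \<le> a then
      int ((nat (a+b-j) choose nat (a-j)) * ((x + nat b) choose nat j)) else 0)"

lemma om_nat: "om x (int A) (int B) (int J) = (if J \<le> A then
      int ((A+B-J choose (A-J)) * ((x + B) choose J)) else 0)"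
  by (auto simp: om_def nat_diff_distrib nat_add_distrib)

lemma om_neg: "j < 0 \<Longrightarrow> om x a b j = 0" by (simp add: om_def)
lemma om_big: "j > a \<Longrightarrow> om x a b j = 0" by (simp add: om_def)
lemma om_negb: "b < 0 \<Longrightarrow> om x a b j = 0" by (simp add: om_def)

lemma omP:
  assumes a0: "0 \<le> a" and b0: "0 \<le> b" and j0: "0 \<le> j" and jk: "j \<le> a + b"
  shows "om x a b j + om x a b (j-1) = om (Suc x) a b j + om (Suc x) a (b-1) (j-1)"
proof -
  obtain A B J where AB: "a = int A" "b = int B" "j = int J"
    using a0 b0 j0 by (metis nonneg_eq_int)
  show ?thesis
  proof (cases J)
    case 0
    then show ?thesis using AB om_nat[of _ A B 0] by (simp add: om_neg)
  next
    case (Suc J')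
    have jm1: "j - 1 = int J'" using AB Suc by simp
    show ?thesis
    proof (cases "J \<le> A")
      case True
      then obtain M where M: "A = M + 1 + J'" using Suc by (metis add.commute add_Suc le_iff_add plus_1_eq_Suc)
      have e1: "om x a b j = int ((M+B choose M) * (x+B choose Suc J'))"
        unfolding AB Suc by (subst om_nat) (simp add: M)
      have e2: "om x a b (j-1) = int ((Suc (M+B) choose Suc M) * (x+B choose J'))"
        unfolding jm1 AB(1,2) by (subst om_nat) (simp add: M)
      have e3: "om (Suc x) a b j = int ((M+B choose M) * (Suc (x+B) choose Suc J'))"
        unfolding AB Suc by (subst om_nat) (simp add: M)
      have e4: "om (Suc x) a (b-1) (j-1) = int ((M+B choose Suc M) * (x+B choose J'))"
      proof (cases B)
        case 0
        then show ?thesis using AB by (simp add: om_def)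
      next
        case (Suc B')
        have hb: "b - 1 = int B'" using AB Suc by simp
        show ?thesis unfolding jm1 AB(1) hb by (subst om_nat) (simp add: M Suc)
      qed
      show ?thesis unfolding e1 e2 e3 e4 by (simp add: algebra_simps)
    next
      case False
      then have "om x a b j = 0" "om (Suc x) a b j = 0" using AB by (auto simp: om_big)
      moreover have "om x a b (j-1) = om (Suc x) a (b-1) (j-1)"
      proof (cases "J = Suc A")
        case True
        then have "B \<ge> 1" using jk AB by simp
        then obtain B' where B': "B = Suc B'" by (cases B) auto
        have JA: "J' = A" using True Suc by simp
        have hb: "b - 1 = int B'" using AB B' by simp
        have h1: "om x a b (j-1) = int (x + B choose A)"
          unfolding jm1 AB(1,2) JA by (subst om_nat) simp
        have h2: "om (Suc x) a (b-1) (j-1) = int (x + B choose A)"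
          unfolding jm1 AB(1) hb JA by (subst om_nat) (simp add: B')
        show ?thesis unfolding h1 h2 ..
      next
        case False
        then have "J' > A" using \<open>\<not> J \<le> A\<close> Suc by simp
        then show ?thesis using AB jm1 by (simp add: om_big)
      qed
      ultimately show ?thesis by simp
    qed
  qed
qed

lemma omQ:
  assumes a0: "0 \<le> a" and b0: "0 \<le> b" and j0: "0 \<le> j" and jk: "j \<le> a + b - 1"
  shows "j * om x a b j + (j+1) * om x a b (j+1) = int x * om x (a-1) b j + a * om (Suc x) a (b-1) j"
proof -
  obtain A B J where AB: "a = int A" "b = int B" "j = int J"
    using a0 b0 j0 by (metis nonneg_eq_int)
  have jp1: "j + 1 = int (Suc J)" using AB by simp
  show ?thesis
  proof (cases "J < A")
    case True
    then obtain M where M: "A = M + 1 + J" by (metis add.commute add_Suc less_iff_Suc_add plus_1_eq_Suc)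
    have am1: "a - 1 = int (M + J)" using AB M by simp
    define n' where "n' = x + B"
    have e1: "om x a b j = int ((Suc (M+B) choose Suc M) * (n' choose J))"
      unfolding AB by (subst om_nat) (simp add: M n'_def)
    have e2: "om x a b (j+1) = int ((M+B choose M) * (n' choose Suc J))"
      unfolding jp1 AB(1,2) by (subst om_nat) (simp add: M n'_def)
    have e3: "om x (a-1) b j = int ((M+B choose M) * (n' choose J))"
      unfolding am1 AB(2,3) by (subst om_nat) (simp add: M n'_def)
    have e4: "om (Suc x) a (b-1) j = int ((M+B choose Suc M) * (n' choose J))"
    proof (cases B)
      case 0
      then show ?thesis using AB by (simp add: om_def)
    next
      case (Suc B')
      have hb: "b - 1 = int B'" using AB Suc by simp
      show ?thesis unfolding AB(1,3) hb by (subst om_nat) (simp add: M Suc n'_def)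
    qed
    have k1: "Suc jj * (nn choose Suc jj) = (nn - jj) * (nn choose jj)" for nn jj
      by (metis binomial_absorb_comp binomial_absorption)
    have k2: "Suc M * (M+B choose Suc M) = B * (M+B choose M)"
      using k1[of M "M+B"] by simp
    have k1i: "(int J + 1) * int (n' choose Suc J) = (int n' - int J) * int (n' choose J)"
    proof (cases "J \<le> n'")
      case True
      then show ?thesis using arg_cong[OF k1[of J n'], of int] by (simp add: of_nat_diff algebra_simps)
    next
      case False
      then show ?thesis by (simp add: binomial_eq_0)
    qed
    have k2i: "(int M + 1) * int (M+B choose Suc M) = int B * int (M+B choose M)"
      using arg_cong[OF k2, of int] by (simp add: algebra_simps)
    have "j * om x a b j + (j+1) * om x a b (j+1)
        = int J * int (M+B choose M) * int (n' choose J) + int J * int (M+B choose Suc M) * int (n' choose J)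
          + int (M+B choose M) * ((int J + 1) * int (n' choose Suc J))"
      unfolding e1 e2 using AB by (simp add: algebra_simps)
    also have "\<dots> = int n' * int (M+B choose M) * int (n' choose J) + int J * int (M+B choose Suc M) * int (n' choose J)"
      unfolding k1i by (simp add: algebra_simps)
    also have "\<dots> = int x * int (M+B choose M) * int (n' choose J) + (int B * int (M+B choose M)) * int (n' choose J)
         + int J * int (M+B choose Suc M) * int (n' choose J)"
      by (simp add: n'_def algebra_simps)
    also have "\<dots> = int x * om x (a-1) b j + a * om (Suc x) a (b-1) j"
      unfolding e3 e4 k2i[symmetric] using AB M by (simp add: algebra_simps)
    finally show ?thesis .
  next
    case False
    show ?thesis
    proof (cases "J = A")
      case True
      then have "B \<ge> 1" using jk AB by simp
      then obtain B' where B': "B = Suc B'" by (cases B) auto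
      have hb: "b - 1 = int B'" using AB B' by simp
      have h1: "om x a b j = int (x + B choose A)"
        unfolding AB True by (subst om_nat) simp
      have h2: "om (Suc x) a (b-1) j = int (x + B choose A)"
        unfolding AB(1,3) hb True by (subst om_nat) (simp add: B')
      have h3: "om x a b (j+1) = 0" "om x (a-1) b j = 0" using AB True by (simp_all add: om_big)
      show ?thesis unfolding h1 h2 h3 using AB True by simp
    next
      case False
      then show ?thesis using AB \<open>\<not> J < A\<close> by (simp add: om_big)
    qed
  qed
qed


lemma sum_shift_int:
  fixes f :: "int \<Rightarrow> 'a::comm_monoid_add"
  assumes "lo \<le> hi + 1" "f lo = 0" "f (hi+1) = 0"
  shows "(\<Sum>j\<in>{lo..hi}. f (j+1)) = (\<Sum>j\<in>{lo..hi}. f j)"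
proof -
  have "(\<Sum>j\<in>{lo..hi}. f (j+1)) = (\<Sum>j\<in>(\<lambda>j. j+1) ` {lo..hi}. f j)"
    by (subst sum.reindex) (auto simp: inj_on_def)
  also have "(\<lambda>j. j+1) ` {lo..hi} = {lo+1..hi+1}"
    by (rule set_eqI) (auto simp: image_iff)
  finally have e1: "(\<Sum>j\<in>{lo..hi}. f (j+1)) = (\<Sum>j\<in>{lo+1..hi+1}. f j)" .
  have s1: "{lo..hi+1} = insert lo {lo+1..hi+1}" using assms(1) by auto
  have s2: "{lo..hi+1} = insert (hi+1) {lo..hi}" using assms(1) by auto
  have "(\<Sum>j\<in>{lo..hi+1}. f j) = f lo + (\<Sum>j\<in>{lo+1..hi+1}. f j)"
    unfolding s1 by (subst sum.insert) auto
  moreover have "(\<Sum>j\<in>{lo..hi+1}. f j) = f (hi+1) + (\<Sum>j\<in>{lo..hi}. f j)"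
    unfolding s2 by (subst sum.insert) auto
  ultimately show ?thesis using e1 assms(2,3) by simp
qed

theorem Wr_closed: "Wr n x a b = (\<Sum>j\<in>{0..int n}. om x a b j * Psi n (a+b-j) j)"
proof (induction n arbitrary: x a b)
  case 0
  show ?case by (auto simp: Psi_0 om_def)
next
  case (Suc n)
  show ?case
  proof (cases "a < 0 \<or> b < 0")
    case True
    then have "om x a b j = 0" if "0 \<le> j" for j using that by (auto simp: om_def)
    then show ?thesis using True by simp
  next
    case False
    then have a0: "0 \<le> a" and b0: "0 \<le> b" by auto
    define k where "k = a + b"
    define P where "P j = Psi n (k-j) j" for j
    define Q where "Q j = Psi n (k-1-j) j" for j
    define w where "w j = om x a b j" for j
    define w1 where "w1 j = om (Suc x) a b j" for j
    define wa where "wa j = om x (a-1) b j" for j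
    define wb where "wb j = om (Suc x) a (b-1) j" for j
    have PQ: "P (j+1) = (int n + 1 - k) * Q j" if "0 \<le> j" for j
    proof -
      have "P (j+1) = Psi n (k-1-j) (j+1)" unfolding P_def by (simp add: algebra_simps)
      also have "\<dots> = (int n - (k-1-j) - j) * Q j" unfolding Q_def using that by (rule Psi_shift)
      finally show ?thesis by simp
    qed
    have Pbig: "P j = 0" if "j > int n" for j unfolding P_def using that by (simp add: Psi_large)
    have Qbig: "Q j = 0" if "j > int n" for j unfolding Q_def using that by (simp add: Psi_large)
    have Pneg: "P j = 0" if "j > k" for j unfolding P_def using that by (simp add: Psi_negN)
    have Qneg: "Q j = 0" if "j > k - 1" for j unfolding Q_def using that by (simp add: Psi_negN)
    have IH1: "Wr n (Suc x) a b = (\<Sum>j\<in>{0..int n}. w1 j * P j)"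
      unfolding Suc.IH w1_def P_def k_def ..
    have IH2: "Wr n x (a-1) b = (\<Sum>j\<in>{0..int n}. wa j * Q j)"
      unfolding Suc.IH wa_def Q_def k_def by (simp add: algebra_simps)
    have IH3: "Wr n (Suc x) a (b-1) = (\<Sum>j\<in>{0..int n}. wb j * Q j)"
      unfolding Suc.IH wb_def Q_def k_def by (simp add: algebra_simps)
    have "Wr (Suc n) x a b = (\<Sum>j\<in>{0..int n}. w1 j * P j + wb j * P (j+1) + (int x * wa j + a * wb j) * Q j)"
    proof -
      have "Wr (Suc n) x a b = (\<Sum>j\<in>{0..int n}. w1 j * P j) + int x * (\<Sum>j\<in>{0..int n}. wa j * Q j)
          + (int n + 1 - b) * (\<Sum>j\<in>{0..int n}. wb j * Q j)"
        using a0 b0 IH1 IH2 IH3 by simp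
      also have "\<dots> = (\<Sum>j\<in>{0..int n}. w1 j * P j + int x * (wa j * Q j) + wb j * ((int n + 1 - b) * Q j))"
        unfolding sum_distrib_left sum.distrib[symmetric] by (rule sum.cong) (simp_all add: algebra_simps)
      also have "\<dots> = (\<Sum>j\<in>{0..int n}. w1 j * P j + wb j * P (j+1) + (int x * wa j + a * wb j) * Q j)"
      proof (rule sum.cong[OF refl])
        fix j assume "j \<in> {0..int n}"
        then have "P (j+1) = (int n + 1 - k) * Q j" using PQ by simp
        then have e: "(int n + 1 - b) * Q j = P (j+1) + a * Q j" by (simp add: k_def algebra_simps)
        have "w1 j * P j + int x * (wa j * Q j) + wb j * ((int n + 1 - b) * Q j) =
            w1 j * P j + int x * (wa j * Q j) + wb j * (P (j+1) + a * Q j)" by (simp only: e)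
        then show "w1 j * P j + int x * (wa j * Q j) + wb j * ((int n + 1 - b) * Q j) =
            w1 j * P j + wb j * P (j+1) + (int x * wa j + a * wb j) * Q j"
          by (simp add: algebra_simps)
      qed
      finally show ?thesis .
    qed
    also have "\<dots> = (\<Sum>j\<in>{0..int n}. (w1 j + wb (j-1)) * P j + (int x * wa j + a * wb j) * Q j)"
    proof -
      have "(\<Sum>j\<in>{0..int n}. wb ((j+1)-1) * P (j+1)) = (\<Sum>j\<in>{0..int n}. wb (j-1) * P j)"
        by (rule sum_shift_int) (auto simp: wb_def om_neg Pbig)
      then show ?thesis by (simp add: sum.distrib algebra_simps)
    qed
    also have "\<dots> = (\<Sum>j\<in>{0..int (Suc n)}. (w1 j + wb (j-1)) * P j + (int x * wa j + a * wb j) * Q j)"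
    proof -
      have "{0..int (Suc n)} = insert (int n + 1) {0..int n}" by auto
      then show ?thesis by (simp add: Pbig Qbig)
    qed
    also have "\<dots> = (\<Sum>j\<in>{0..int (Suc n)}. (w j + w (j-1)) * P j + (j * w j + (j+1) * w (j+1)) * Q j)"
    proof (rule sum.cong[OF refl])
      fix j assume j: "j \<in> {0..int (Suc n)}"
      have p1: "(w1 j + wb (j-1)) * P j = (w j + w (j-1)) * P j"
      proof (cases "j \<le> k")
        case True
        then show ?thesis using omP[OF a0 b0, of j x] j unfolding w_def w1_def wb_def k_def by simp
      next
        case False
        then show ?thesis using Pneg by simp
      qed
      have p2: "(int x * wa j + a * wb j) * Q j = (j * w j + (j+1) * w (j+1)) * Q j"
      proof (cases "j \<le> k - 1")
        case True
        then show ?thesis using omQ[OF a0 b0, of j x] j unfolding w_def wa_def wb_def k_def by simp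
      next
        case False
        then show ?thesis using Qneg by simp
      qed
      show "(w1 j + wb (j-1)) * P j + (int x * wa j + a * wb j) * Q j =
          (w j + w (j-1)) * P j + (j * w j + (j+1) * w (j+1)) * Q j" unfolding p1 p2 ..
    qed
    also have "\<dots> = (\<Sum>j\<in>{0..int (Suc n)}. w j * P j + w j * P (j+1) + j * w j * Q j + j * w j * Q (j-1))"
    proof -
      have s1: "(\<Sum>j\<in>{0..int (Suc n)}. w ((j+1)-1) * P (j+1)) = (\<Sum>j\<in>{0..int (Suc n)}. w (j-1) * P j)"
        by (rule sum_shift_int) (auto simp: w_def om_neg Pbig)
      have s2: "(\<Sum>j\<in>{0..int (Suc n)}. ((j+1)-1+1) * w ((j+1)-1+1) * Q ((j+1)-1)) =
                (\<Sum>j\<in>{0..int (Suc n)}. (j-1+1) * w (j-1+1) * Q (j-1))"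
        by (rule sum_shift_int) (auto simp: Qbig)
      show ?thesis using s1 s2 by (simp add: sum.distrib algebra_simps)
    qed
    also have "\<dots> = (\<Sum>j\<in>{0..int (Suc n)}. w j * Psi (Suc n) (k-j) j)"
    proof (rule sum.cong[OF refl])
      fix j assume j: "j \<in> {0..int (Suc n)}"
      have "Psi (Suc n) (k-j) j = P j + (int n + 1 - (k-j)) * Q j + j * Q (j-1)"
        unfolding Psi_rec P_def Q_def by (simp add: algebra_simps)
      also have "\<dots> = P j + P (j+1) + j * Q j + j * Q (j-1)"
        using PQ[of j] j by (simp add: algebra_simps)
      finally show "w j * P j + w j * P (j+1) + j * w j * Q j + j * w j * Q (j-1) = w j * Psi (Suc n) (k-j) j"
        by (simp add: algebra_simps)
    qed
    finally show ?thesis unfolding w_def k_def .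
  qed
qed

definition FS :: "int set \<Rightarrow> (int \<Rightarrow> int set) \<Rightarrow> (int \<times> int) set set" where
  "FS X D = {P. P \<subseteq> Sigma X D \<and> fst ` P = X \<and> inj_on fst P \<and> inj_on snd P}"

lemma FS_finite: "finite X \<Longrightarrow> (\<forall>r\<in>X. finite (D r)) \<Longrightarrow> finite (FS X D)"
proof -
  assume "finite X" "\<forall>r\<in>X. finite (D r)"
  then have "finite (Sigma X D)" by auto
  then have "finite (Pow (Sigma X D))" by simp
  moreover have "FS X D \<subseteq> Pow (Sigma X D)" by (auto simp: FS_def)
  ultimately show ?thesis by (rule finite_subset[rotated])
qed

lemma FS_insert:
  assumes bX: "b \<notin> X"
  shows "FS (insert b X) D = (\<lambda>(P,d). insert (b,d) P) ` (SIGMA P:FS X D. D b - snd ` P)"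
proof
  show "(\<lambda>(P,d). insert (b,d) P) ` (SIGMA P:FS X D. D b - snd ` P) \<subseteq> FS (insert b X) D"
  proof
    fix Q assume "Q \<in> (\<lambda>(P,d). insert (b,d) P) ` (SIGMA P:FS X D. D b - snd ` P)"
    then obtain P d where P: "P \<in> FS X D" and d: "d \<in> D b" "d \<notin> snd ` P" and Q: "Q = insert (b,d) P"
      by auto
    have "b \<notin> fst ` P" using P bX by (auto simp: FS_def)
    then show "Q \<in> FS (insert b X) D" using P d unfolding Q FS_def
      by (auto simp: inj_on_def)
  qed
next
  show "FS (insert b X) D \<subseteq> (\<lambda>(P,d). insert (b,d) P) ` (SIGMA P:FS X D. D b - snd ` P)"
  proof
    fix Q assume Q: "Q \<in> FS (insert b X) D"
    then have "b \<in> fst ` Q" by (auto simp: FS_def)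
    then obtain d where bd: "(b,d) \<in> Q" by force
    define P where "P = Q - {(b,d)}"
    have injf: "inj_on fst Q" and injs: "inj_on snd Q" and sub: "Q \<subseteq> Sigma (insert b X) D"
      and fQ: "fst ` Q = insert b X" using Q by (auto simp: FS_def)
    have nb: "\<And>e. (b,e) \<in> P \<Longrightarrow> False"
    proof -
      fix e assume "(b,e) \<in> P"
      then have "(b,e) \<in> Q" "(b,e) \<noteq> (b,d)" by (auto simp: P_def)
      then show False using injf bd by (metis fst_conv inj_on_eq_iff)
    qed
    have "fst ` P = X"
    proof
      show "fst ` P \<subseteq> X" using sub nb by (force simp: P_def)
      show "X \<subseteq> fst ` P"
      proof
        fix r assume "r \<in> X"
        then have "r \<in> fst ` Q" using fQ by auto
        then obtain e where "(r,e) \<in> Q" by force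
        moreover have "r \<noteq> b" using \<open>r \<in> X\<close> bX by auto
        ultimately have "(r,e) \<in> P" by (auto simp: P_def)
        then show "r \<in> fst ` P" by force
      qed
    qed
    moreover have "P \<subseteq> Sigma X D" using sub nb by (force simp: P_def)
    moreover have "inj_on fst P" "inj_on snd P" using injf injs by (auto simp: P_def inj_on_def)
    ultimately have PF: "P \<in> FS X D" by (simp add: FS_def)
    have "d \<in> D b" using sub bd by auto
    moreover have "d \<notin> snd ` P"
    proof
      assume "d \<in> snd ` P"
      then obtain r where "(r,d) \<in> P" by force
      then have "(r,d) \<in> Q" "(r,d) \<noteq> (b,d)" using nb by (auto simp: P_def)
      then show False using injs bd by (metis snd_conv inj_on_eq_iff)
    qed
    moreover have "Q = insert (b,d) P" using bd by (auto simp: P_def)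
    ultimately show "Q \<in> (\<lambda>(P,d). insert (b,d) P) ` (SIGMA P:FS X D. D b - snd ` P)"
      using PF by force
  qed
qed

lemma FS_insert_inj:
  assumes bX: "b \<notin> X"
  shows "inj_on (\<lambda>(P,d). insert (b,d) P) (SIGMA P:FS X D. D b - snd ` P)"
proof (rule inj_onI, clarsimp)
  fix P d P' d'
  assume P: "P \<in> FS X D" and P': "P' \<in> FS X D" and eq: "insert (b,d) P = insert (b,d') P'"
  have nP: "(b,e) \<notin> P" "(b,e) \<notin> P'" for e using P P' bX by (force simp: FS_def)+
  have "d = d'" using eq nP by (metis insertE insertI1 prod.inject)
  moreover have "P = P'" using eq nP \<open>d = d'\<close> by (metis insert_ident)
  ultimately show "P = P' \<and> d = d'" by simp
qed

lemma ferrers_max: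
  assumes "finite X" and fin: "\<And>r. r \<in> X \<Longrightarrow> finite (D r)"
    and mono: "\<And>r s. r \<in> X \<Longrightarrow> s \<in> X \<Longrightarrow> s \<le> r \<Longrightarrow> D s \<subseteq> D r"
  shows "card (FS X D) = (\<Prod>r\<in>X. card (D r) - card {s\<in>X. s < r})"
  using assms
proof (induction X rule: finite_linorder_max_induct)
  case empty
  have "FS {} D = {{}}" by (auto simp: FS_def)
  then show ?case by simp
next
  case (insert b X)
  have bX: "b \<notin> X" using insert by auto
  have finX: "\<And>r. r \<in> X \<Longrightarrow> finite (D r)" using insert by auto
  have monoX: "\<And>r s. r \<in> X \<Longrightarrow> s \<in> X \<Longrightarrow> s \<le> r \<Longrightarrow> D s \<subseteq> D r" using insert by auto
  have IH: "card (FS X D) = (\<Prod>r\<in>X. card (D r) - card {s\<in>X. s < r})"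
    using insert.IH finX monoX by blast
  have fin: "finite (FS X D)" using FS_finite[of X D] insert finX by blast
  have "card (FS (insert b X) D) = card (SIGMA P:FS X D. D b - snd ` P)"
    unfolding FS_insert[OF bX] by (rule card_image[OF FS_insert_inj[OF bX]])
  also have "\<dots> = (\<Sum>P\<in>FS X D. card (D b - snd ` P))"
    by (rule card_SigmaI) (use fin insert in auto)
  also have "\<dots> = (\<Sum>P\<in>FS X D. card (D b) - card X)"
  proof (rule sum.cong[OF refl])
    fix P assume P: "P \<in> FS X D"
    have "snd ` P \<subseteq> D b"
    proof
      fix d assume "d \<in> snd ` P"
      then obtain r where "(r,d) \<in> P" by force
      then have "r \<in> X" "d \<in> D r" using P by (auto simp: FS_def)
      then show "d \<in> D b" using insert.prems(2)[of b r] insert.hyps(2) by force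
    qed
    moreover have "card (snd ` P) = card X"
    proof -
      have "card (snd ` P) = card P" using P by (auto simp: FS_def card_image)
      also have "\<dots> = card (fst ` P)" using P by (auto simp: FS_def card_image)
      finally show ?thesis using P by (simp add: FS_def)
    qed
    ultimately show "card (D b - snd ` P) = card (D b) - card X"
      using insert.prems(1)[of b] by (simp add: card_Diff_subset finite_subset)
  qed
  also have "\<dots> = card (FS X D) * (card (D b) - card X)" by simp
  also have "\<dots> = (\<Prod>r\<in>insert b X. card (D r) - card {s\<in>insert b X. s < r})"
  proof -
    have "{s\<in>insert b X. s < b} = X" using insert.hyps(2) by auto
    moreover have "\<And>r. r \<in> X \<Longrightarrow> {s\<in>insert b X. s < r} = {s\<in>X. s < r}"
      using insert.hyps(2) by auto
    ultimately show ?thesis using IH insert.hyps(1) bX by (simp add: mult.commute)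
  qed
  finally show ?case .
qed


lemma ferrers_min:
  assumes "finite X" and fin: "\<And>r. r \<in> X \<Longrightarrow> finite (D r)"
    and mono: "\<And>r s. r \<in> X \<Longrightarrow> s \<in> X \<Longrightarrow> r \<le> s \<Longrightarrow> D s \<subseteq> D r"
  shows "card (FS X D) = (\<Prod>r\<in>X. card (D r) - card {s\<in>X. s > r})"
  using assms
proof (induction X rule: finite_linorder_min_induct)
  case empty
  have "FS {} D = {{}}" by (auto simp: FS_def)
  then show ?case by simp
next
  case (insert b X)
  have bX: "b \<notin> X" using insert by auto
  have finX: "\<And>r. r \<in> X \<Longrightarrow> finite (D r)" using insert by auto
  have monoX: "\<And>r s. r \<in> X \<Longrightarrow> s \<in> X \<Longrightarrow> r \<le> s \<Longrightarrow> D s \<subseteq> D r" using insert by auto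
  have IH: "card (FS X D) = (\<Prod>r\<in>X. card (D r) - card {s\<in>X. s > r})"
    using insert.IH finX monoX by blast
  have fin: "finite (FS X D)" using FS_finite[of X D] insert finX by blast
  have "card (FS (insert b X) D) = card (SIGMA P:FS X D. D b - snd ` P)"
    unfolding FS_insert[OF bX] by (rule card_image[OF FS_insert_inj[OF bX]])
  also have "\<dots> = (\<Sum>P\<in>FS X D. card (D b - snd ` P))"
    by (rule card_SigmaI) (use fin insert in auto)
  also have "\<dots> = (\<Sum>P\<in>FS X D. card (D b) - card X)"
  proof (rule sum.cong[OF refl])
    fix P assume P: "P \<in> FS X D"
    have "snd ` P \<subseteq> D b"
    proof
      fix d assume "d \<in> snd ` P"
      then obtain r where "(r,d) \<in> P" by force
      then have "r \<in> X" "d \<in> D r" using P by (auto simp: FS_def)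
      then show "d \<in> D b" using insert.prems(2)[of b r] insert.hyps(2) by force
    qed
    moreover have "card (snd ` P) = card X"
    proof -
      have "card (snd ` P) = card P" using P by (auto simp: FS_def card_image)
      also have "\<dots> = card (fst ` P)" using P by (auto simp: FS_def card_image)
      finally show ?thesis using P by (simp add: FS_def)
    qed
    ultimately show "card (D b - snd ` P) = card (D b) - card X"
      using insert.prems(1)[of b] by (simp add: card_Diff_subset finite_subset)
  qed
  also have "\<dots> = card (FS X D) * (card (D b) - card X)" by simp
  also have "\<dots> = (\<Prod>r\<in>insert b X. card (D r) - card {s\<in>insert b X. s > r})"
  proof -
    have "{s\<in>insert b X. s > b} = X" using insert.hyps(2) by auto
    moreover have "\<And>r. r \<in> X \<Longrightarrow> {s\<in>insert b X. s > r} = {s\<in>X. s > r}"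
      using insert.hyps(2) by auto
    ultimately show ?thesis using IH insert.hyps(1) bX by (simp add: mult.commute)
  qed
  finally show ?case .
qed


definition BD :: "nat \<Rightarrow> (int \<times> int) set" where
  "BD m = Sigma {1..int m} (\<lambda>r. {r - int m..r-1})"

definition SP :: "nat \<Rightarrow> nat \<Rightarrow> (int \<times> int) set set" where
  "SP m k = {P. P \<subseteq> BD m \<and> card P = k \<and> inj_on fst P \<and> inj_on snd P}"

lemma AS_SP: "A_S m k = card (SP m k)"
proof -
  define phi :: "int \<times> int \<Rightarrow> int \<times> int" where "phi = (\<lambda>(r,c). (r, r - c))"
  have phiphi: "phi (phi p) = p" for p by (cases p) (simp add: phi_def)
  have injphi: "inj phi" by (metis injI phiphi)
  define TS where "TS = {T. T \<subseteq> S_board m \<and> card T = k \<and>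
     (\<forall>x\<in>T. \<forall>y\<in>T. x \<noteq> y \<longrightarrow> \<not> (fst x = fst y \<or> fst x - snd x = fst y - snd y))}"
  have fp: "fst (phi p) = fst p" and sp: "snd (phi p) = fst p - snd p" for p
    by (cases p, simp add: phi_def)+
  have "SP m k = (\<lambda>T. phi ` T) ` TS"
  proof
    show "(\<lambda>T. phi ` T) ` TS \<subseteq> SP m k"
    proof
      fix P assume "P \<in> (\<lambda>T. phi ` T) ` TS"
      then obtain T where T: "T \<in> TS" and P: "P = phi ` T" by auto
      have "P \<subseteq> BD m"
        using T unfolding P TS_def S_board_def BD_def phi_def by auto
      moreover have "card P = k" using T unfolding P TS_def
        by (simp add: card_image inj_on_subset[OF injphi])
      moreover have "inj_on fst P"
        using T unfolding P TS_def inj_on_def by (auto simp: fp)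
      moreover have "inj_on snd P"
        using T unfolding P TS_def inj_on_def by (auto simp: sp)
      ultimately show "P \<in> SP m k" by (simp add: SP_def)
    qed
  next
    show "SP m k \<subseteq> (\<lambda>T. phi ` T) ` TS"
    proof
      fix P assume P: "P \<in> SP m k"
      define T where "T = phi ` P"
      have PT: "P = phi ` T" unfolding T_def image_image phiphi by simp
      have "T \<subseteq> S_board m" using P unfolding T_def SP_def BD_def S_board_def phi_def by auto
      moreover have "card T = k" using P unfolding T_def SP_def
        by (simp add: card_image inj_on_subset[OF injphi])
      moreover have "\<forall>x\<in>T. \<forall>y\<in>T. x \<noteq> y \<longrightarrow> \<not> (fst x = fst y \<or> fst x - snd x = fst y - snd y)"
      proof (intro ballI impI)
        fix x y assume xy: "x \<in> T" "y \<in> T" "x \<noteq> y"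
        then obtain p q where pq: "p \<in> P" "q \<in> P" "x = phi p" "y = phi q" "p \<noteq> q"
          unfolding T_def by auto
        have "fst p \<noteq> fst q" "snd p \<noteq> snd q" using P pq unfolding SP_def inj_on_def by auto
        then show "\<not> (fst x = fst y \<or> fst x - snd x = fst y - snd y)"
          using pq by (simp add: fp sp)
      qed
      ultimately have "T \<in> TS" by (simp add: TS_def)
      then show "P \<in> (\<lambda>T. phi ` T) ` TS" using PT by auto
    qed
  qed
  moreover have "inj_on (\<lambda>T. phi ` T) TS"
    by (rule inj_onI) (simp add: inj_image_eq_iff[OF injphi])
  ultimately have "card (SP m k) = card TS" by (simp add: card_image)
  then show ?thesis by (simp add: A_S_def TS_def)
qed

definition DL :: "int \<Rightarrow> int set" where "DL r = {0..r-1}"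
definition DR :: "nat \<Rightarrow> int \<Rightarrow> int set" where "DR m r = {r - int m..-1}"

definition prsk :: "nat \<Rightarrow> nat \<Rightarrow> (int set \<times> int set) set" where
  "prsk m k = {(X,Y). X \<subseteq> {1..int m} \<and> Y \<subseteq> {1..int m} \<and> X \<inter> Y = {} \<and> card X + card Y = k}"

lemma prsk_finite: "finite (prsk m k)"
proof -
  have "prsk m k \<subseteq> Pow {1..int m} \<times> Pow {1..int m}" by (auto simp: prsk_def)
  then show ?thesis by (rule finite_subset) auto
qed

lemma SP_decomp: "card (SP m k) = (\<Sum>(X,Y)\<in>prsk m k. card (FS X DL) * card (FS Y (DR m)))"
proof -
  define G where "G = (SIGMA XY:prsk m k. FS (fst XY) DL \<times> FS (snd XY) (DR m))"
  define h :: "(int set \<times> int set) \<times> ((int \<times> int) set \<times> (int \<times> int) set) \<Rightarrow> (int \<times> int) set"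
    where "h = (\<lambda>(XY, (PL, PR)). PL \<union> PR)"
  have PLpos: "snd p \<ge> 0" if "PL \<in> FS X DL" "p \<in> PL" for PL X p
    using that by (auto simp: FS_def DL_def)
  have PRneg: "snd p < 0" if "PR \<in> FS Y (DR m)" "p \<in> PR" for PR Y p
    using that by (auto simp: FS_def DR_def)
  have inj: "inj_on h G"
  proof (rule inj_onI)
    fix u v assume u: "u \<in> G" and v: "v \<in> G" and huv: "h u = h v"
    obtain X Y PL PR where u': "u = ((X,Y),(PL,PR))" by (metis prod.collapse)
    obtain X' Y' PL' PR' where v': "v = ((X',Y'),(PL',PR'))" by (metis prod.collapse)
    have m1: "PL \<in> FS X DL" "PR \<in> FS Y (DR m)" using u u' by (auto simp: G_def)
    have m2: "PL' \<in> FS X' DL" "PR' \<in> FS Y' (DR m)" using v v' by (auto simp: G_def)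
    have U: "PL \<union> PR = PL' \<union> PR'" using huv u' v' by (simp add: h_def)
    have "PL = (PL \<union> PR) \<inter> {p. snd p \<ge> 0}" using PLpos[OF m1(1)] PRneg[OF m1(2)] by force
    also have "\<dots> = PL'" unfolding U using PLpos[OF m2(1)] PRneg[OF m2(2)] by force
    finally have e1: "PL = PL'" .
    have "PR = (PL \<union> PR) \<inter> {p. snd p < 0}" using PLpos[OF m1(1)] PRneg[OF m1(2)] by force
    also have "\<dots> = PR'" unfolding U using PLpos[OF m2(1)] PRneg[OF m2(2)] by force
    finally have e2: "PR = PR'" .
    have "X = fst ` PL" "Y = fst ` PR" "X' = fst ` PL'" "Y' = fst ` PR'"
      using m1 m2 by (auto simp: FS_def)
    then show "u = v" using u' v' e1 e2 by simp
  qed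
  have img: "h ` G = SP m k"
  proof
    show "h ` G \<subseteq> SP m k"
    proof
      fix P assume "P \<in> h ` G"
      then obtain X Y PL PR where XY: "(X,Y) \<in> prsk m k" and PL: "PL \<in> FS X DL" and PR: "PR \<in> FS Y (DR m)"
        and P: "P = PL \<union> PR" by (auto simp: G_def h_def)
      have X: "X \<subseteq> {1..int m}" and Y: "Y \<subseteq> {1..int m}" and XYd: "X \<inter> Y = {}" and ck: "card X + card Y = k"
        using XY by (auto simp: prsk_def)
      have PLs: "PL \<subseteq> Sigma X DL" "fst ` PL = X" "inj_on fst PL" "inj_on snd PL" using PL by (auto simp: FS_def)
      have PRs: "PR \<subseteq> Sigma Y (DR m)" "fst ` PR = Y" "inj_on fst PR" "inj_on snd PR" using PR by (auto simp: FS_def)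
      have "P \<subseteq> BD m"
      proof
        fix p assume "p \<in> P"
        then have "p \<in> PL \<or> p \<in> PR" using P by simp
        then show "p \<in> BD m"
        proof
          assume "p \<in> PL"
          then obtain r d where "p = (r,d)" "r \<in> X" "d \<in> DL r" using PLs(1) by force
          then show ?thesis using X by (auto simp: BD_def DL_def)
        next
          assume "p \<in> PR"
          then obtain r d where "p = (r,d)" "r \<in> Y" "d \<in> DR m r" using PRs(1) by force
          then show ?thesis using Y by (auto simp: BD_def DR_def)
        qed
      qed
      moreover have disj: "PL \<inter> PR = {}" using PLpos[OF PL] PRneg[OF PR] by force
      moreover have fin: "finite PL" "finite PR"
      proof -
        have "finite X" "finite Y" using X Y finite_subset by blast+
        then show "finite PL" "finite PR" using PLs(2) PRs(2) PLs(3) PRs(3)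
          by (metis finite_imageD)+
      qed
      moreover have "card PL = card X" "card PR = card Y"
        using PLs PRs by (auto simp: card_image)
      ultimately have "card P = k" using ck unfolding P by (simp add: card_Un_disjoint)
      moreover have "inj_on fst P"
      proof -
        have "fst ` PL \<inter> fst ` PR = {}" using PLs(2) PRs(2) XYd by simp
        then show ?thesis unfolding P using PLs(3) PRs(3) by (auto simp: inj_on_Un)
      qed
      moreover have "inj_on snd P"
      proof -
        have "snd ` PL \<inter> snd ` PR = {}" using PLpos[OF PL] PRneg[OF PR] by force
        then show ?thesis unfolding P using PLs(4) PRs(4) by (auto simp: inj_on_Un)
      qed
      ultimately show "P \<in> SP m k" using \<open>P \<subseteq> BD m\<close> by (simp add: SP_def)
    qed
  next
    show "SP m k \<subseteq> h ` G"
    proof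
      fix P assume P: "P \<in> SP m k"
      have PB: "P \<subseteq> BD m" and cP: "card P = k" and i1: "inj_on fst P" and i2: "inj_on snd P"
        using P by (auto simp: SP_def)
      define PL where "PL = P \<inter> {p. snd p \<ge> 0}"
      define PR where "PR = P \<inter> {p. snd p < 0}"
      define X where "X = fst ` PL"
      define Y where "Y = fst ` PR"
      have PLR: "P = PL \<union> PR" by (auto simp: PL_def PR_def)
      have PLFS: "PL \<in> FS X DL"
        using PB i1 i2 unfolding FS_def X_def PL_def BD_def DL_def
        by (auto intro: inj_on_subset) (force intro: rev_image_eqI)
      have PRFS: "PR \<in> FS Y (DR m)"
        using PB i1 i2 unfolding FS_def Y_def PR_def BD_def DR_def
        by (auto intro: inj_on_subset) (force intro: rev_image_eqI)
      have finB: "finite (BD m)" by (auto simp: BD_def)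
      have finP: "finite P" using PB finB finite_subset by blast
      have "X \<subseteq> {1..int m}" "Y \<subseteq> {1..int m}"
        using PB unfolding X_def Y_def PL_def PR_def BD_def by auto
      moreover have "X \<inter> Y = {}"
      proof -
        have "PL \<inter> PR = {}" by (auto simp: PL_def PR_def)
        then show ?thesis using i1 unfolding X_def Y_def PLR
          by (auto simp: inj_on_def)
      qed
      moreover have "card X + card Y = k"
      proof -
        have "card X = card PL" "card Y = card PR"
        proof -
          have "inj_on fst PL" "inj_on fst PR" using i1 PLR inj_on_subset[of fst P] by auto
          then show "card X = card PL" "card Y = card PR" unfolding X_def Y_def by (simp_all add: card_image)
        qed
        moreover have "card P = card PL + card PR"
        proof -
          have "finite PL" "finite PR" using finP by (auto simp: PL_def PR_def)
          moreover have "PL \<inter> PR = {}" by (auto simp: PL_def PR_def)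
          ultimately have "card (PL \<union> PR) = card PL + card PR" by (rule card_Un_disjoint)
          then show ?thesis using PLR by simp
        qed
        ultimately show ?thesis using cP by simp
      qed
      ultimately have "(X,Y) \<in> prsk m k" by (simp add: prsk_def)
      then have "((X,Y),(PL,PR)) \<in> G" using PLFS PRFS by (simp add: G_def)
      moreover have "P = h ((X,Y),(PL,PR))" using PLR by (simp add: h_def)
      ultimately show "P \<in> h ` G" by blast
    qed
  qed
  have "card (SP m k) = card G" using img inj card_image by fastforce
  also have "\<dots> = (\<Sum>XY\<in>prsk m k. card (FS (fst XY) DL \<times> FS (snd XY) (DR m)))"
  proof -
    have "finite (FS X DL) \<and> finite (FS Y (DR m))" if "(X,Y) \<in> prsk m k" for X Y
    proof -
      have "finite X" "finite Y" using that by (auto simp: prsk_def intro: finite_subset)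
      then show ?thesis by (auto intro!: FS_finite simp: DL_def DR_def)
    qed
    then show ?thesis unfolding G_def by (intro card_SigmaI) (auto simp: prsk_finite)
  qed
  also have "\<dots> = (\<Sum>(X,Y)\<in>prsk m k. card (FS X DL) * card (FS Y (DR m)))"
    by (rule sum.cong) (auto simp: card_cartesian_product)
  finally show ?thesis .
qed


definition prs :: "int set \<Rightarrow> nat \<Rightarrow> nat \<Rightarrow> (int set \<times> int set) set" where
  "prs I a b = {(X,Y). X \<subseteq> I \<and> Y \<subseteq> I \<and> X \<inter> Y = {} \<and> card X = a \<and> card Y = b}"

definition wt :: "int set \<Rightarrow> nat \<Rightarrow> int set \<times> int set \<Rightarrow> nat" where
  "wt I x XY = (\<Prod>r\<in>fst XY. x + card {s\<in>I. s < r \<and> s \<notin> fst XY}) * (\<Prod>r\<in>snd XY. card {s\<in>I. r < s \<and> s \<notin> snd XY})"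

definition WS :: "int set \<Rightarrow> nat \<Rightarrow> nat \<Rightarrow> nat \<Rightarrow> nat" where
  "WS I x a b = (\<Sum>XY\<in>prs I a b. wt I x XY)"

lemma prs_finite: "finite I \<Longrightarrow> finite (prs I a b)"
proof -
  assume "finite I"
  moreover have "prs I a b \<subseteq> Pow I \<times> Pow I" by (auto simp: prs_def)
  ultimately show ?thesis by (metis finite_Pow_iff finite_SigmaI finite_subset)
qed

lemma Wr_neg: "a < 0 \<or> b < 0 \<Longrightarrow> Wr n x a b = 0"
  by (cases n) auto

lemma wt_S0:
  assumes lo: "\<forall>s\<in>I. lo < s" "lo \<notin> I" and XY: "fst XY \<subseteq> I" "snd XY \<subseteq> I"
  shows "wt (insert lo I) x XY = wt I (Suc x) XY"
proof -
  obtain X Y where e: "XY = (X,Y)" by fastforce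
  have "x + card {s\<in>insert lo I. s < r \<and> s \<notin> X} = Suc x + card {s\<in>I. s < r \<and> s \<notin> X}" if "r \<in> X" for r
  proof -
    have "lo < r" using that XY lo e by auto
    then have "{s\<in>insert lo I. s < r \<and> s \<notin> X} = insert lo {s\<in>I. s < r \<and> s \<notin> X}"
      using lo XY e by auto
    moreover have "finite {s\<in>I. s < r \<and> s \<notin> X}"
    proof -
      have "{s\<in>I. s < r \<and> s \<notin> X} \<subseteq> {lo..r}" using lo by auto
      then show ?thesis by (rule finite_subset) simp
    qed
    ultimately show ?thesis using lo by simp
  qed
  moreover have "{s\<in>insert lo I. r < s \<and> s \<notin> Y} = {s\<in>I. r < s \<and> s \<notin> Y}" if "r \<in> Y" for r
  proof -
    have "lo < r" using that XY lo e by auto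
    then show ?thesis by auto
  qed
  ultimately show ?thesis unfolding wt_def e by (simp cong: prod.cong)
qed

lemma wt_S1:
  assumes lo: "\<forall>s\<in>I. lo < s" "lo \<notin> I" and XY: "X \<subseteq> I" "Y \<subseteq> I" and fX: "finite X"
  shows "wt (insert lo I) x (insert lo X, Y) = x * wt I x (X,Y)"
proof -
  define F where "F r = x + card {s\<in>insert lo I. s < r \<and> s \<notin> insert lo X}" for r
  define G where "G r = x + card {s\<in>I. s < r \<and> s \<notin> X}" for r
  define F2 where "F2 r = card {s\<in>insert lo I. r < s \<and> s \<notin> Y}" for r
  define G2 where "G2 r = card {s\<in>I. r < s \<and> s \<notin> Y}" for r
  have lonX: "lo \<notin> X" using XY lo by auto
  have e: "{s\<in>insert lo I. s < lo \<and> s \<notin> insert lo X} = {}" using lo by auto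
  have Flo: "F lo = x" unfolding F_def e by simp
  have FG: "F r = G r" if "r \<in> X" for r
  proof -
    have "{s\<in>insert lo I. s < r \<and> s \<notin> insert lo X} = {s\<in>I. s < r \<and> s \<notin> X}"
      using that XY lo by auto
    then show ?thesis by (simp add: F_def G_def)
  qed
  have FG2: "F2 r = G2 r" if "r \<in> Y" for r
  proof -
    have "lo < r" using that XY lo by auto
    then have "{s\<in>insert lo I. r < s \<and> s \<notin> Y} = {s\<in>I. r < s \<and> s \<notin> Y}" by auto
    then show ?thesis by (simp add: F2_def G2_def)
  qed
  have "wt (insert lo I) x (insert lo X, Y) = (\<Prod>r\<in>insert lo X. F r) * (\<Prod>r\<in>Y. F2 r)"
    unfolding wt_def F_def F2_def by simp
  also have "\<dots> = (F lo * (\<Prod>r\<in>X. F r)) * (\<Prod>r\<in>Y. F2 r)"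
    by (simp only: prod.insert[OF fX lonX])
  also have "\<dots> = x * ((\<Prod>r\<in>X. G r) * (\<Prod>r\<in>Y. G2 r))"
    using prod.cong[OF refl FG, of X] prod.cong[OF refl FG2, of Y] Flo by simp
  also have "\<dots> = x * wt I x (X,Y)" unfolding wt_def G_def G2_def by simp
  finally show ?thesis .
qed

lemma wt_S2:
  assumes lo: "\<forall>s\<in>I. lo < s" "lo \<notin> I" and XY: "X \<subseteq> I" "Y \<subseteq> I" and fY: "finite Y" and fI: "finite I"
  shows "wt (insert lo I) x (X, insert lo Y) = (card I - card Y) * wt I (Suc x) (X,Y)"
proof -
  have "x + card {s\<in>insert lo I. s < r \<and> s \<notin> X} = Suc x + card {s\<in>I. s < r \<and> s \<notin> X}" if "r \<in> X" for r
  proof -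
    have "lo < r" using that XY lo by auto
    then have "{s\<in>insert lo I. s < r \<and> s \<notin> X} = insert lo {s\<in>I. s < r \<and> s \<notin> X}"
      using lo XY by auto
    moreover have "finite {s\<in>I. s < r \<and> s \<notin> X}" using fI by simp
    ultimately show ?thesis using lo by simp
  qed
  moreover have "{s\<in>insert lo I. lo < s \<and> s \<notin> insert lo Y} = I - Y" using lo by auto
  moreover have "{s\<in>insert lo I. r < s \<and> s \<notin> insert lo Y} = {s\<in>I. r < s \<and> s \<notin> Y}" if "r \<in> Y" for r
  proof -
    have "lo < r" using that XY lo by auto
    then show ?thesis by auto
  qed
  moreover have "lo \<notin> Y" using XY lo by auto
  moreover have "card (I - Y) = card I - card Y" using XY fI by (simp add: card_Diff_subset finite_subset)
  ultimately show ?thesis unfolding wt_def using fY by (simp cong: prod.cong add: ac_simps)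
qed

lemma WS_empty_big: "finite I \<Longrightarrow> b > card I \<Longrightarrow> WS I x a b = 0"
proof -
  assume "finite I" "b > card I"
  then have "prs I a b = {}" by (auto simp: prs_def dest: card_mono)
  then show ?thesis by (simp add: WS_def)
qed

lemma WS_Wr: "finite I \<Longrightarrow> int (WS I x a b) = Wr (card I) x (int a) (int b)"
proof (induction I arbitrary: x a b rule: finite_linorder_min_induct)
  case empty
  have "prs {} a b = (if a = 0 \<and> b = 0 then {({},{})} else {})" by (auto simp: prs_def)
  then show ?case by (simp add: WS_def wt_def)
next
  case (insert lo I)
  have fI: "finite I" and lo: "\<forall>s\<in>I. lo < s" using insert by auto
  have loI: "lo \<notin> I" using lo by auto
  let ?I' = "insert lo I"
  define S0 where "S0 = {XY\<in>prs ?I' a b. lo \<notin> fst XY \<and> lo \<notin> snd XY}"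
  define S1 where "S1 = {XY\<in>prs ?I' a b. lo \<in> fst XY}"
  define S2 where "S2 = {XY\<in>prs ?I' a b. lo \<in> snd XY}"
  have split: "prs ?I' a b = S0 \<union> (S1 \<union> S2)" by (auto simp: S0_def S1_def S2_def)
  have fin': "finite (prs ?I' a b)" using fI by (simp add: prs_finite)
  have d1: "S1 \<inter> S2 = {}" by (auto simp: S1_def S2_def prs_def)
  have d2: "S0 \<inter> (S1 \<union> S2) = {}" by (auto simp: S0_def S1_def S2_def)
  have fS: "finite S0" "finite S1" "finite S2" using fin' split by (auto intro: finite_subset)
  have WSsplit: "WS ?I' x a b = sum (wt ?I' x) S0 + sum (wt ?I' x) S1 + sum (wt ?I' x) S2"
    unfolding WS_def split using fS d1 d2 by (simp add: sum.union_disjoint)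
  have e0: "sum (wt ?I' x) S0 = WS I (Suc x) a b"
  proof -
    have "S0 = prs I a b" using loI by (auto simp: S0_def prs_def)
    moreover have "wt ?I' x XY = wt I (Suc x) XY" if "XY \<in> prs I a b" for XY
      using that wt_S0[OF lo loI] by (auto simp: prs_def)
    ultimately show ?thesis by (simp add: WS_def)
  qed
  have e1: "int (sum (wt ?I' x) S1) = int x * Wr (card I) x (int a - 1) (int b)"
  proof (cases a)
    case 0
    have "False" if "X \<subseteq> ?I'" "card X = 0" "lo \<in> X" for X
      using that fI by (metis card_0_eq empty_iff finite_insert finite_subset)
    then have "S1 = {}" using 0 by (auto simp: S1_def prs_def)
    then show ?thesis using 0 by (simp add: Wr_neg)
  next
    case (Suc a')
    have "S1 = (\<lambda>(X,Y). (insert lo X, Y)) ` prs I a' b"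
    proof
      show "S1 \<subseteq> (\<lambda>(X,Y). (insert lo X, Y)) ` prs I a' b"
      proof
        fix XY assume "XY \<in> S1"
        then obtain X Y where XY: "XY = (X,Y)" "lo \<in> X" "X \<subseteq> ?I'" "Y \<subseteq> ?I'" "X \<inter> Y = {}"
          "card X = a" "card Y = b" by (auto simp: S1_def prs_def)
        have fX: "finite X" using XY(3) fI finite_subset by blast
        have "(X - {lo}, Y) \<in> prs I a' b" using XY Suc fX loI by (auto simp: prs_def)
        moreover have "XY = (insert lo (X - {lo}), Y)" using XY by auto
        ultimately show "XY \<in> (\<lambda>(X,Y). (insert lo X, Y)) ` prs I a' b" by force
      qed
    next
      show "(\<lambda>(X,Y). (insert lo X, Y)) ` prs I a' b \<subseteq> S1"
      proof
        fix XY assume "XY \<in> (\<lambda>(X,Y). (insert lo X, Y)) ` prs I a' b"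
        then obtain X Y where XY: "XY = (insert lo X, Y)" "(X,Y) \<in> prs I a' b" by auto
        have fX: "finite X" using XY(2) fI finite_subset by (auto simp: prs_def)
        have "lo \<notin> X" using XY(2) loI by (auto simp: prs_def)
        then show "XY \<in> S1" using XY fX loI Suc by (auto simp: S1_def prs_def)
      qed
    qed
    moreover have "inj_on (\<lambda>(X,Y). (insert lo X, Y)) (prs I a' b)"
      using loI by (auto simp: inj_on_def prs_def)
    ultimately have "sum (wt ?I' x) S1 = (\<Sum>XY\<in>prs I a' b. wt ?I' x (insert lo (fst XY), snd XY))"
      by (simp add: sum.reindex split_beta')
    also have "\<dots> = (\<Sum>XY\<in>prs I a' b. x * wt I x XY)"
    proof (rule sum.cong[OF refl])
      fix XY assume "XY \<in> prs I a' b"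
      then have s: "fst XY \<subseteq> I" "snd XY \<subseteq> I" by (auto simp: prs_def)
      then have "finite (fst XY)" using fI finite_subset by blast
      then show "wt ?I' x (insert lo (fst XY), snd XY) = x * wt I x XY"
        using wt_S1[OF lo loI s] by simp
    qed
    also have "\<dots> = x * WS I x a' b" by (simp add: WS_def sum_distrib_left)
    finally show ?thesis using insert.IH[of x a' b] Suc by simp
  qed
  have e2: "int (sum (wt ?I' x) S2) = (int (card I) + 1 - int b) * Wr (card I) (Suc x) (int a) (int b - 1)"
  proof (cases b)
    case 0
    have "False" if "X \<subseteq> ?I'" "card X = 0" "lo \<in> X" for X
      using that fI by (metis card_0_eq empty_iff finite_insert finite_subset)
    then have "S2 = {}" using 0 by (auto simp: S2_def prs_def)
    then show ?thesis using 0 by (simp add: Wr_neg)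
  next
    case (Suc b')
    have "S2 = (\<lambda>(X,Y). (X, insert lo Y)) ` prs I a b'"
    proof
      show "S2 \<subseteq> (\<lambda>(X,Y). (X, insert lo Y)) ` prs I a b'"
      proof
        fix XY assume "XY \<in> S2"
        then obtain X Y where XY: "XY = (X,Y)" "lo \<in> Y" "X \<subseteq> ?I'" "Y \<subseteq> ?I'" "X \<inter> Y = {}"
          "card X = a" "card Y = b" by (auto simp: S2_def prs_def)
        have fY: "finite Y" using XY(4) fI finite_subset by blast
        have "(X, Y - {lo}) \<in> prs I a b'" using XY Suc fY loI by (auto simp: prs_def)
        moreover have "XY = (X, insert lo (Y - {lo}))" using XY by auto
        ultimately show "XY \<in> (\<lambda>(X,Y). (X, insert lo Y)) ` prs I a b'" by force
      qed
    next
      show "(\<lambda>(X,Y). (X, insert lo Y)) ` prs I a b' \<subseteq> S2"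
      proof
        fix XY assume "XY \<in> (\<lambda>(X,Y). (X, insert lo Y)) ` prs I a b'"
        then obtain X Y where XY: "XY = (X, insert lo Y)" "(X,Y) \<in> prs I a b'" by auto
        have fY: "finite Y" using XY(2) fI finite_subset by (auto simp: prs_def)
        have "lo \<notin> Y" "lo \<notin> X" using XY(2) loI by (auto simp: prs_def)
        then show "XY \<in> S2" using XY fY loI Suc by (auto simp: S2_def prs_def)
      qed
    qed
    moreover have "inj_on (\<lambda>(X,Y). (X, insert lo Y)) (prs I a b')"
      using loI by (auto simp: inj_on_def prs_def)
    ultimately have "sum (wt ?I' x) S2 = (\<Sum>XY\<in>prs I a b'. wt ?I' x (fst XY, insert lo (snd XY)))"
      by (simp add: sum.reindex split_beta')
    also have "\<dots> = (\<Sum>XY\<in>prs I a b'. (card I - b') * wt I (Suc x) XY)"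
    proof (rule sum.cong[OF refl])
      fix XY assume XY: "XY \<in> prs I a b'"
      then have c: "card (snd XY) = b'" by (auto simp: prs_def)
      have s: "fst XY \<subseteq> I" "snd XY \<subseteq> I" using XY by (auto simp: prs_def)
      then have "finite (snd XY)" using fI finite_subset by blast
      then show "wt ?I' x (fst XY, insert lo (snd XY)) = (card I - b') * wt I (Suc x) XY"
        using wt_S2[OF lo loI s _ fI] c by simp
    qed
    also have "\<dots> = (card I - b') * WS I (Suc x) a b'" by (simp add: WS_def sum_distrib_left)
    finally have s2: "sum (wt ?I' x) S2 = (card I - b') * WS I (Suc x) a b'" .
    show ?thesis
    proof (cases "b' \<le> card I")
      case True
      then show ?thesis using s2 insert.IH[of "Suc x" a b'] Suc by (simp add: of_nat_diff)
    next
      case False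
      then have "WS I (Suc x) a b' = 0" using WS_empty_big fI by simp
      then show ?thesis using s2 insert.IH[of "Suc x" a b'] Suc by simp
    qed
  qed
  have "card ?I' = Suc (card I)" using fI loI by simp
  then have "Wr (card ?I') x (int a) (int b) = Wr (card I) (Suc x) (int a) (int b)
      + int x * Wr (card I) x (int a - 1) (int b) + (int (card I) + 1 - int b) * Wr (card I) (Suc x) (int a) (int b - 1)"
    by simp
  also have "\<dots> = int (WS ?I' x a b)"
    using WSsplit e0 e1 e2 insert.IH[of "Suc x" a b] by simp
  finally show ?case by simp
qed


lemma card_split_lt:
  assumes "X \<subseteq> I" "finite I"
  shows "card {s\<in>I. P s} = card {s\<in>X. P s} + card {s\<in>I. P s \<and> s \<notin> X}"
proof -
  have "{s\<in>I. P s} = {s\<in>X. P s} \<union> {s\<in>I. P s \<and> s \<notin> X}" using assms by auto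
  moreover have "finite {s\<in>X. P s}" "finite {s\<in>I. P s \<and> s \<notin> X}"
    using assms by (auto intro: finite_subset)
  ultimately show ?thesis by (simp add: card_Un_disjoint[symmetric]) (metis (no_types, lifting) Int_emptyI card_Un_disjoint mem_Collect_eq)
qed

lemma FL_card:
  assumes X: "X \<subseteq> {1..int m}"
  shows "card (FS X DL) = (\<Prod>r\<in>X. 1 + card {s\<in>{1..int m}. s < r \<and> s \<notin> X})"
proof -
  have fX: "finite X" using X finite_subset by blast
  have "card (FS X DL) = (\<Prod>r\<in>X. card (DL r) - card {s\<in>X. s < r})"
    by (rule ferrers_max[OF fX]) (auto simp: DL_def)
  also have "\<dots> = (\<Prod>r\<in>X. 1 + card {s\<in>{1..int m}. s < r \<and> s \<notin> X})"
  proof (rule prod.cong[OF refl])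
    fix r assume r: "r \<in> X"
    then have r1: "1 \<le> r" "r \<le> int m" using X by auto
    have "{s\<in>{1..int m}. s < r} = {1..r-1}" using r1 by auto
    then have c: "card {s\<in>{1..int m}. s < r} = nat r - 1" by simp
    have "card {s\<in>{1..int m}. s < r} = card {s\<in>X. s < r} + card {s\<in>{1..int m}. s < r \<and> s \<notin> X}"
      by (rule card_split_lt[OF X]) simp
    moreover have "card (DL r) = nat r" by (simp add: DL_def)
    ultimately show "card (DL r) - card {s\<in>X. s < r} = 1 + card {s\<in>{1..int m}. s < r \<and> s \<notin> X}"
      using c r1 by linarith
  qed
  finally show ?thesis .
qed

lemma FR_card:
  assumes Y: "Y \<subseteq> {1..int m}"
  shows "card (FS Y (DR m)) = (\<Prod>r\<in>Y. card {s\<in>{1..int m}. r < s \<and> s \<notin> Y})"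
proof -
  have fY: "finite Y" using Y finite_subset by blast
  have "card (FS Y (DR m)) = (\<Prod>r\<in>Y. card (DR m r) - card {s\<in>Y. s > r})"
    by (rule ferrers_min[OF fY]) (auto simp: DR_def)
  also have "\<dots> = (\<Prod>r\<in>Y. card {s\<in>{1..int m}. r < s \<and> s \<notin> Y})"
  proof (rule prod.cong[OF refl])
    fix r assume r: "r \<in> Y"
    then have r1: "1 \<le> r" "r \<le> int m" using Y by auto
    have "{s\<in>{1..int m}. r < s} = {r+1..int m}" using r1 by auto
    then have c: "card {s\<in>{1..int m}. r < s} = nat (int m - r)" by simp
    have "card {s\<in>{1..int m}. r < s} = card {s\<in>Y. r < s} + card {s\<in>{1..int m}. r < s \<and> s \<notin> Y}"
      by (rule card_split_lt[OF Y]) simp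
    moreover have "card (DR m r) = nat (int m - r)" by (simp add: DR_def)
    ultimately show "card (DR m r) - card {s\<in>Y. s > r} = card {s\<in>{1..int m}. r < s \<and> s \<notin> Y}"
      using c by simp
  qed
  finally show ?thesis .
qed

lemma AS_Wr: "int (A_S m k) = (\<Sum>a\<in>{..k}. Wr m 1 (int a) (int (k - a)))"
proof -
  define I where "I = {1..int m}"
  have fI: "finite I" by (simp add: I_def)
  have cI: "card I = m" by (simp add: I_def)
  have "A_S m k = (\<Sum>(X,Y)\<in>prsk m k. card (FS X DL) * card (FS Y (DR m)))"
    using AS_SP SP_decomp by simp
  also have "\<dots> = (\<Sum>XY\<in>prsk m k. wt I 1 XY)"
    by (rule sum.cong[OF refl]) (auto simp: prsk_def FL_card FR_card wt_def I_def)
  also have "\<dots> = (\<Sum>a\<in>{..k}. \<Sum>XY\<in>{XY\<in>prsk m k. card (fst XY) = a}. wt I 1 XY)"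
    by (rule sum.group[symmetric]) (use prsk_finite in \<open>auto simp: prsk_def\<close>)
  also have "\<dots> = (\<Sum>a\<in>{..k}. WS I 1 a (k - a))"
  proof (rule sum.cong[OF refl])
    fix a assume "a \<in> {..k}"
    then have "{XY\<in>prsk m k. card (fst XY) = a} = prs I a (k - a)"
      by (auto simp: prsk_def prs_def I_def)
    then show "(\<Sum>XY\<in>{XY\<in>prsk m k. card (fst XY) = a}. wt I 1 XY) = WS I 1 a (k - a)"
      by (simp add: WS_def)
  qed
  finally have "int (A_S m k) = (\<Sum>a\<in>{..k}. int (WS I 1 a (k - a)))" by simp
  also have "\<dots> = (\<Sum>a\<in>{..k}. Wr m 1 (int a) (int (k - a)))"
    using WS_Wr[OF fI] cI by simp
  finally show ?thesis .
qed

lemma assoc_zero: "n < 2 * r \<Longrightarrow> assoc_stirling n r = 0"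
  by (induction n r rule: assoc_stirling.induct) auto

lemma assoc_Suc_0: "assoc_stirling (Suc n) 0 = 0"
  by (cases n) auto

definition AX :: "nat \<Rightarrow> nat \<Rightarrow> nat" where
  "AX m N = (\<Sum>p\<le>N. assoc_stirling (p+N) p * (m choose (p+N)))"

lemma AX_0: "AX m 0 = 1" by (simp add: AX_def)

lemma AX_m0: "AX 0 N = (if N = 0 then 1 else 0)"
  by (auto simp: AX_def)

lemma AX_rec: "AX (Suc m) (Suc N') = AX m (Suc N') + (m - N') * AX m N'"
proof -
  define N where "N = Suc N'"
  have "AX (Suc m) N = (\<Sum>p\<le>N. assoc_stirling (p+N) p * (m choose (p+N)))
      + (\<Sum>p\<le>N. assoc_stirling (p+N) p * (m choose (p+N')))"
  proof -
    have "Suc m choose (p+N) = (m choose (p+N)) + (m choose (p+N'))" for p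
      by (simp add: N_def)
    then show ?thesis by (simp add: AX_def algebra_simps sum.distrib)
  qed
  also have "(\<Sum>p\<le>N. assoc_stirling (p+N) p * (m choose (p+N')))
      = (\<Sum>p\<le>N'. assoc_stirling (Suc p+N) (Suc p) * (m choose (Suc p+N')))"
    unfolding N_def by (subst sum.atMost_Suc_shift) (simp add: assoc_Suc_0)
  also have "\<dots> = (\<Sum>p\<le>N'. (Suc p * assoc_stirling (Suc p + N') (Suc p)) * (m choose (Suc p+N')))
      + (\<Sum>p\<le>N'. (Suc (p + N') * (m choose (Suc (p+N')))) * assoc_stirling (p + N') p)"
  proof -
    have "assoc_stirling (Suc p+N) (Suc p) = Suc p * assoc_stirling (Suc p + N') (Suc p) + Suc (p+N') * assoc_stirling (p+N') p" for p
      by (simp add: N_def)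
    then show ?thesis by (simp add: sum.distrib algebra_simps)
  qed
  also have "(\<Sum>p\<le>N'. (Suc (p + N') * (m choose (Suc (p+N')))) * assoc_stirling (p + N') p)
      = (\<Sum>p\<le>N'. m * ((m - 1) choose (p + N')) * assoc_stirling (p + N') p)"
  proof (rule sum.cong[OF refl])
    fix p
    have "Suc (p + N') * (m choose Suc (p + N')) = m * ((m - 1) choose (p + N'))"
    proof (cases m)
      case 0 then show ?thesis by simp
    next
      case (Suc m') then show ?thesis using Suc_times_binomial[of "p+N'" m'] by simp
    qed
    then show "Suc (p + N') * (m choose Suc (p + N')) * assoc_stirling (p + N') p =
         m * (m - 1 choose (p + N')) * assoc_stirling (p + N') p" by simp
  qed
  also have "(\<Sum>p\<le>N'. (Suc p * assoc_stirling (Suc p + N') (Suc p)) * (m choose (Suc p+N')))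
      = (\<Sum>p\<le>N'. (p * assoc_stirling (p + N') p) * (m choose (p+N')))"
  proof -
    have "(\<Sum>p\<le>Suc N'. (p * assoc_stirling (p + N') p) * (m choose (p+N')))
        = (\<Sum>p\<le>N'. (Suc p * assoc_stirling (Suc p + N') (Suc p)) * (m choose (Suc p+N')))"
      by (subst sum.atMost_Suc_shift) simp
    moreover have "assoc_stirling (Suc N' + N') (Suc N') = 0" by (rule assoc_zero) simp
    ultimately show ?thesis by simp
  qed
  also have "(\<Sum>p\<le>N'. (p * assoc_stirling (p + N') p) * (m choose (p+N')))
      + (\<Sum>p\<le>N'. m * ((m - 1) choose (p + N')) * assoc_stirling (p + N') p)
      = (m - N') * AX m N'"
  proof -
    have "(p * assoc_stirling (p + N') p) * (m choose (p+N')) + m * ((m - 1) choose (p + N')) * assoc_stirling (p + N') p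
        = (m - N') * (assoc_stirling (p + N') p * (m choose (p+N')))" for p
    proof -
      have e: "m * ((m - 1) choose (p + N')) = (m - (p+N')) * (m choose (p+N'))"
        by (simp add: binomial_absorb_comp)
      have "p * (m choose (p+N')) + (m - (p+N')) * (m choose (p+N')) = (m - N') * (m choose (p+N'))"
      proof (cases "p + N' \<le> m")
        case True
        then have "p + (m - (p+N')) = m - N'" by simp
        then show ?thesis by (metis add_mult_distrib)
      next
        case False
        then show ?thesis by (simp add: binomial_eq_0)
      qed
      then have h: "p * (m choose (p+N')) + (m - (p+N')) * (m choose (p+N')) = (m - N') * (m choose (p+N'))" .
      have "(p * assoc_stirling (p + N') p) * (m choose (p+N')) + m * ((m - 1) choose (p + N')) * assoc_stirling (p + N') p
          = assoc_stirling (p + N') p * (p * (m choose (p+N')) + m * ((m - 1) choose (p + N')))"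
        by (simp add: algebra_simps)
      also have "\<dots> = assoc_stirling (p + N') p * (p * (m choose (p+N')) + (m - (p+N')) * (m choose (p+N')))"
        by (simp only: e)
      also have "\<dots> = assoc_stirling (p + N') p * ((m - N') * (m choose (p+N')))"
        by (simp only: h)
      finally show ?thesis by (simp add: mult_ac)
    qed
    then show ?thesis by (simp add: AX_def sum.distrib[symmetric] sum_distrib_left)
  qed
  finally show ?thesis unfolding N_def by (simp add: AX_def algebra_simps)
qed

lemma AX_Stirling: "AX m N = (if N \<le> m then Stirling m (m - N) else 0)"
proof (induction m arbitrary: N)
  case 0
  then show ?case by (simp add: AX_m0)
next
  case (Suc m)
  show ?case
  proof (cases N)
    case 0
    then show ?thesis by (simp add: AX_0)
  next
    case (Suc N')
    have r: "AX (Suc m) N = AX m N + (m - N') * AX m N'" using AX_rec Suc by simp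
    show ?thesis
    proof (cases "N' < m")
      case True
      then obtain z where z: "m - N' = Suc z" by (metis Suc_diff_Suc)
      have "Stirling (Suc m) (Suc m - N) = Stirling (Suc m) (Suc z)" using Suc z True by simp
      also have "\<dots> = Suc z * Stirling m (Suc z) + Stirling m z" by simp
      moreover have "m - Suc N' = z" using z by simp
      ultimately show ?thesis using r Suc.IH[of N] Suc.IH[of N'] Suc True z by auto
    next
      case False
      then show ?thesis using r Suc.IH[of N] Suc.IH[of N'] Suc by auto
    qed
  qed
qed


lemma choose_prod_shift:
  assumes "n \<le> m" "s \<le> j"
  shows "(m choose (n + j - s)) * ((n + j - s) choose (j - s)) = (m choose n) * ((m - n) choose (j - s))"
proof -
  define i where "i = n + j - s"
  have ni: "n \<le> i" "i - n = j - s" using assms by (auto simp: i_def)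
  have "(i choose (j - s)) = (i choose n)"
    using ni by (metis add_diff_cancel_left' binomial_symmetric le_add_diff_inverse)
  moreover have "(m choose i) * (i choose n) = (m choose n) * ((m - n) choose (i - n))"
  proof (cases "i \<le> m")
    case True
    then show ?thesis using choose_mult[OF ni(1) True] by simp
  next
    case False
    then show ?thesis using assms by (simp add: binomial_eq_0)
  qed
  ultimately show ?thesis using ni by (simp add: i_def)
qed

lemma E4nat:
  "(\<Sum>s\<le>j. (m choose (n + j - s)) * (p choose s) * ((n + j - s) choose (j - s))) = (m choose n) * ((m - n + p) choose j)"
proof (cases "n \<le> m")
  case True
  have "(\<Sum>s\<le>j. (m choose (n + j - s)) * (p choose s) * ((n + j - s) choose (j - s)))
      = (\<Sum>s\<le>j. (m choose n) * ((p choose s) * ((m - n) choose (j - s))))"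
  proof (rule sum.cong[OF refl])
    fix s assume "s \<in> {..j}"
    then have "(m choose (n + j - s)) * ((n + j - s) choose (j - s)) = (m choose n) * ((m - n) choose (j - s))"
      using choose_prod_shift[OF True] by simp
    then show "(m choose (n + j - s)) * (p choose s) * ((n + j - s) choose (j - s)) =
        (m choose n) * ((p choose s) * ((m - n) choose (j - s)))" by (metis mult.assoc mult.commute)
  qed
  also have "\<dots> = (m choose n) * ((p + (m - n)) choose j)"
    by (simp add: sum_distrib_left[symmetric] vandermonde)
  finally show ?thesis by (simp add: add.commute)
next
  case False
  then show ?thesis by (simp add: binomial_eq_0)
qed

lemma T_sum: "(\<Sum>b\<le>N. (N choose b) * (b choose J)) = (N choose J) * 2 ^ (N - J)"
proof (cases "J \<le> N")
  case True
  have "(\<Sum>b\<le>N. (N choose b) * (b choose J)) = (\<Sum>b\<in>{J..N}. (N choose b) * (b choose J))"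
    by (rule sum.mono_neutral_right) (auto simp: binomial_eq_0)
  also have "\<dots> = (\<Sum>b\<in>{J..N}. (N choose J) * ((N - J) choose (b - J)))"
    by (rule sum.cong[OF refl]) (simp add: choose_mult)
  also have "\<dots> = (N choose J) * (\<Sum>b\<in>{J..N}. ((N - J) choose (b - J)))"
    by (simp add: sum_distrib_left)
  also have "(\<Sum>b\<in>{J..N}. ((N - J) choose (b - J))) = (\<Sum>i\<le>N - J. ((N - J) choose i))"
  proof -
    have "(\<Sum>i\<le>N - J. ((N - J) choose i)) = (\<Sum>b\<in>(\<lambda>i. i + J) ` {..N - J}. ((N - J) choose (b - J)))"
      by (subst sum.reindex) (auto simp: inj_on_def)
    moreover have "(\<lambda>i. i + J) ` {..N - J} = {J..N}"
    proof -
      have "{..N - J} = {0..N - J}" by auto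
      then show ?thesis using True by simp
    qed
    ultimately show ?thesis by simp
  qed
  also have "\<dots> = 2 ^ (N - J)" by (rule choose_row_sum)
  finally show ?thesis .
next
  case False
  then show ?thesis by (simp add: binomial_eq_0)
qed

lemma sum_int_nat: "(\<Sum>d\<in>{0..int n}. g d) = (\<Sum>d\<le>n. g (int d))"
proof -
  have "{0..int n} = int ` {0..n}" by (simp add: image_int_atLeastAtMost)
  moreover have "{0..n} = {..n}" by auto
  ultimately show ?thesis by (simp add: sum.reindex)
qed

lemma swap_tri:
  fixes f :: "int \<Rightarrow> int \<Rightarrow> 'a::comm_monoid_add"
  shows "(\<Sum>d\<in>{0..n}. \<Sum>i\<in>{d..n}. f d i) = (\<Sum>i\<in>{0..n}. \<Sum>d\<in>{0..i}. f d i)"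
proof -
  have "(\<Sum>d\<in>{0..n}. \<Sum>i\<in>{d..n}. f d i) = (\<Sum>d\<in>{0..n}. \<Sum>i\<in>{0..n}. if d \<le> i then f d i else 0)"
  proof (rule sum.cong[OF refl])
    fix d assume "d \<in> {0..n}"
    then have e: "{d..n} = {i\<in>{0..n}. d \<le> i}" by auto
    show "(\<Sum>i\<in>{d..n}. f d i) = (\<Sum>i\<in>{0..n}. if d \<le> i then f d i else 0)"
      by (subst e, rule sum.inter_filter, simp)
  qed
  also have "\<dots> = (\<Sum>i\<in>{0..n}. \<Sum>d\<in>{0..n}. if d \<le> i then f d i else 0)"
    by (rule sum.swap)
  also have "\<dots> = (\<Sum>i\<in>{0..n}. \<Sum>d\<in>{0..i}. f d i)"
  proof (rule sum.cong[OF refl])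
    fix i assume "i \<in> {0..n}"
    then have e: "{0..i} = {d\<in>{0..n}. d \<le> i}" by auto
    show "(\<Sum>d\<in>{0..n}. if d \<le> i then f d i else 0) = (\<Sum>d\<in>{0..i}. f d i)"
      by (subst e, rule sum.inter_filter[symmetric], simp)
  qed
  finally show ?thesis .
qed

lemma stirling_binom:
  "(\<Sum>d\<le>n. (-1) ^ (n - d) / fact n * real (stirling n d) * real m ^ d) = real (m choose n)"
proof -
  have "(\<Sum>d\<le>n. (-1) ^ (n - d) / fact n * real (stirling n d) * real m ^ d)
      = (-1) ^ n / fact n * (\<Sum>d\<le>n. real (stirling n d) * (- real m) ^ d)"
  proof -
    have "(-1::real) ^ (n - d) * real m ^ d = (-1) ^ n * (- real m) ^ d" if "d \<le> n" for d
    proof -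
      have "(-1::real) ^ n = (-1) ^ (n - d) * (-1) ^ d" using that by (simp flip: power_add)
      then have "(-1::real) ^ n * (- real m) ^ d = (-1) ^ (n - d) * ((-1) ^ d * (-1) ^ d) * real m ^ d"
        by (simp add: power_minus[of "real m"] mult_ac)
      also have "(-1::real) ^ d * (-1) ^ d = 1" by (simp flip: power_add)
      finally show ?thesis by simp
    qed
    then show ?thesis by (simp add: sum_distrib_left mult_ac)
  qed
  also have "(\<Sum>d\<le>n. real (stirling n d) * (- real m) ^ d) = pochhammer (- real m) n"
    by (rule stirling_pochhammer)
  also have "(-1) ^ n / fact n * pochhammer (- real m) n = real m gchoose n"
    by (simp add: gbinomial_pochhammer)
  also have "\<dots> = real (m choose n)" by (simp add: binomial_gbinomial)
  finally show ?thesis .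
qed

lemma Bsum_nat:
  "(\<Sum>b\<le>J. (P choose b) * (KK choose (J - b)) * (b choose S)) =
     (if S \<le> J then (P choose S) * ((P - S + KK) choose (J - S)) else 0)"
proof (cases "S \<le> J")
  case True
  have "(\<Sum>b\<le>J. (P choose b) * (KK choose (J - b)) * (b choose S))
      = (\<Sum>b\<in>{S..J}. (P choose b) * (KK choose (J - b)) * (b choose S))"
    by (rule sum.mono_neutral_right) (auto simp: binomial_eq_0)
  also have "\<dots> = (\<Sum>b\<in>{S..J}. (P choose S) * (((P - S) choose (b - S)) * (KK choose (J - b))))"
  proof (rule sum.cong[OF refl])
    fix b assume b: "b \<in> {S..J}"
    have "(P choose b) * (b choose S) = (P choose S) * ((P - S) choose (b - S))"
    proof (cases "b \<le> P")
      case True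
      then show ?thesis using b choose_mult[of S b P] by simp
    next
      case False
      then show ?thesis using b by (simp add: binomial_eq_0) arith
    qed
    then show "(P choose b) * (KK choose (J - b)) * (b choose S) = (P choose S) * (((P - S) choose (b - S)) * (KK choose (J - b)))"
      by (metis mult.assoc mult.commute)
  qed
  also have "\<dots> = (P choose S) * (\<Sum>t\<le>J - S. ((P - S) choose t) * (KK choose ((J - S) - t)))"
  proof -
    have "(\<Sum>b\<in>{S..J}. ((P - S) choose (b - S)) * (KK choose (J - b))) =
          (\<Sum>t\<le>J - S. ((P - S) choose t) * (KK choose ((J - S) - t)))"
    proof -
      have "{..J - S} = {0..J - S}" by auto
      then have img: "(\<lambda>t. t + S) ` {..J - S} = {S..J}" using True by simp
      define g where "g b = ((P - S) choose (b - S)) * (KK choose (J - b))" for b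
      have "(\<Sum>b\<in>{S..J}. g b) = (\<Sum>b\<in>(\<lambda>t. t + S) ` {..J - S}. g b)" using img by simp
      also have "\<dots> = (\<Sum>t\<le>J - S. g (t + S))" by (subst sum.reindex) (auto simp: inj_on_def)
      also have "\<dots> = (\<Sum>t\<le>J - S. ((P - S) choose t) * (KK choose ((J - S) - t)))"
        by (rule sum.cong[OF refl]) (simp add: g_def ac_simps)
      finally show ?thesis by (simp add: g_def)
    qed
    then show ?thesis by (simp only: sum_distrib_left[symmetric])
  qed
  also have "\<dots> = (P choose S) * ((P - S + KK) choose (J - S))" by (simp only: vandermonde)
  finally show ?thesis using True by simp
next
  case False
  then show ?thesis by (auto intro!: sum.neutral simp: binomial_eq_0)
qed

definition InnerF :: "nat \<Rightarrow> int \<Rightarrow> real" where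
  "InnerF k i = (\<Sum>j\<in>{0..U i (int k)}. alpha (int k) j *
       (\<Sum>p\<in>{L i (int k)..int k - j}. real (assoc_stirling (nat (p + int k - j)) (nat p)) *
         (\<Sum>b\<in>{0..j}. kbinom p b * kbinom (int k) (j - b) * kbinom b (int k + p - i))))"

lemma E_step1: "(\<Sum>d\<in>{0..2 * int k}. c_coef d (int k) * real m ^ nat d) =
   (\<Sum>i\<in>{0..2 * int k}. real (m choose nat i) * InnerF k i)"
proof -
  define cf where "cf i d = (-1) ^ nat (i - d) / fact (nat i) * real (stirling (nat i) (nat d))" for i d :: int
  have cc: "c_coef d (int k) = (\<Sum>i\<in>{d..2 * int k}. cf i d * InnerF k i)" for d
    unfolding c_coef_def cf_def InnerF_def by (simp add: mult.assoc)
  have "(\<Sum>d\<in>{0..2 * int k}. c_coef d (int k) * real m ^ nat d) =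
      (\<Sum>d\<in>{0..2 * int k}. \<Sum>i\<in>{d..2 * int k}. cf i d * real m ^ nat d * InnerF k i)"
    unfolding cc sum_distrib_right by (intro sum.cong refl) (simp add: mult_ac)
  also have "\<dots> = (\<Sum>i\<in>{0..2 * int k}. \<Sum>d\<in>{0..i}. cf i d * real m ^ nat d * InnerF k i)"
    by (rule swap_tri)
  also have "\<dots> = (\<Sum>i\<in>{0..2 * int k}. real (m choose nat i) * InnerF k i)"
  proof (rule sum.cong[OF refl])
    fix i assume "i \<in> {0..2 * int k}"
    then have i0: "0 \<le> i" by simp
    have "(\<Sum>d\<in>{0..i}. cf i d * real m ^ nat d) = (\<Sum>d\<in>{0..int (nat i)}. cf i d * real m ^ nat d)"
      using i0 by simp
    also have "\<dots> = (\<Sum>d\<le>nat i. cf i (int d) * real m ^ nat (int d))"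
      by (rule sum_int_nat)
    also have "\<dots> = (\<Sum>d\<le>nat i. (-1) ^ (nat i - d) / fact (nat i) * real (stirling (nat i) d) * real m ^ d)"
      by (rule sum.cong[OF refl]) (use i0 in \<open>simp add: cf_def nat_diff_distrib'\<close>)
    also have "\<dots> = real (m choose nat i)" by (rule stirling_binom)
    finally show "(\<Sum>d\<in>{0..i}. cf i d * real m ^ nat d * InnerF k i) = real (m choose nat i) * InnerF k i"
      by (simp add: sum_distrib_right[symmetric])
  qed
  finally show ?thesis .
qed

lemma kb_nat: "kbinom (int a) (int b) = real (a choose b)"
  by (simp add: kbinom_def binomial_gbinomial)

lemma kb_negr: "0 \<le> n \<Longrightarrow> r < 0 \<Longrightarrow> kbinom n r = 0"
  by (simp add: kbinom_def)

lemma kb_big: "0 \<le> n \<Longrightarrow> n < r \<Longrightarrow> kbinom n r = 0"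
proof -
  assume "0 \<le> n" "n < r"
  then obtain a b where "n = int a" "r = int b" "a < b" by (metis nonneg_eq_int order.strict_trans1 zless_nat_conj nat_int less_imp_le)
  then show ?thesis by (simp add: kb_nat binomial_eq_0)
qed

lemma alpha_zero:
  assumes "0 \<le> k" "\<lceil>real_of_int k / 2\<rceil> < j" "j \<le> k"
  shows "alpha k j = 0"
proof -
  have "2 * j \<ge> k + 2"
  proof -
    have "real_of_int k / 2 \<le> of_int \<lceil>real_of_int k / 2\<rceil>" by (rule le_of_int_ceiling)
    moreover have "of_int \<lceil>real_of_int k / 2\<rceil> \<le> real_of_int j - 1" using assms(2) by linarith
    ultimately have "real_of_int k \<le> 2 * real_of_int j - 2" by linarith
    then show ?thesis by linarith
  qed
  then have "kbinom (k - j) (j - 1) = 0" "kbinom (k - j + 1) j = 0"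
    using assms by (auto intro!: kb_big)
  then show ?thesis by (simp add: alpha_def)
qed


definition Bv :: "nat \<Rightarrow> int \<Rightarrow> int \<Rightarrow> int \<Rightarrow> real" where
  "Bv k p j i = (if 0 \<le> int k + p - i \<and> int k + p - i \<le> j then
     real ((nat p choose nat (int k + p - i)) * (nat i choose nat (j - (int k + p - i)))) else 0)"

lemma Bsum_int:
  assumes p0: "0 \<le> p" and j0: "0 \<le> j" and i0: "0 \<le> i"
  shows "(\<Sum>b\<in>{0..j}. kbinom p b * kbinom (int k) (j - b) * kbinom b (int k + p - i)) = Bv k p j i"
proof -
  obtain P J where PJ: "p = int P" "j = int J" using p0 j0 by (metis nonneg_eq_int)
  define S' where "S' = int k + p - i"
  have "(\<Sum>b\<in>{0..j}. kbinom p b * kbinom (int k) (j - b) * kbinom b S')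
      = (\<Sum>b\<le>J. kbinom (int P) (int b) * kbinom (int k) (int J - int b) * kbinom (int b) S')"
    unfolding PJ by (rule sum_int_nat)
  also have "\<dots> = (\<Sum>b\<le>J. real ((P choose b) * (k choose (J - b))) * kbinom (int b) S')"
    by (rule sum.cong[OF refl]) (simp add: kb_nat of_nat_diff[symmetric] del: of_nat_diff)
  finally have e1: "(\<Sum>b\<in>{0..j}. kbinom p b * kbinom (int k) (j - b) * kbinom b S') =
      (\<Sum>b\<le>J. real ((P choose b) * (k choose (J - b))) * kbinom (int b) S')" .
  show ?thesis
  proof (cases "S' < 0")
    case True
    then have "kbinom (int b) S' = 0" for b by (simp add: kb_negr)
    then show ?thesis using e1 True by (simp add: Bv_def S'_def)
  next
    case False
    then obtain S where S: "S' = int S" by (metis nonneg_eq_int not_less)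
    have "(\<Sum>b\<le>J. real ((P choose b) * (k choose (J - b))) * kbinom (int b) S')
        = real (\<Sum>b\<le>J. (P choose b) * (k choose (J - b)) * (b choose S))"
      unfolding S by (simp add: kb_nat)
    also have "\<dots> = real (if S \<le> J then (P choose S) * ((P - S + k) choose (J - S)) else 0)"
      by (simp only: Bsum_nat)
    also have "\<dots> = Bv k p j i"
    proof (cases "S \<le> J")
      case True
      have ni: "nat i = P - S + k \<or> (P choose S) = 0"
      proof (cases "S \<le> P")
        case True
        then show ?thesis using S PJ i0 unfolding S'_def by auto
      next
        case False
        then show ?thesis by (simp add: binomial_eq_0)
      qed
      have "nat (j - (int k + p - i)) = J - S" using S PJ True unfolding S'_def by auto
      moreover have "nat (int k + p - i) = S" using S unfolding S'_def by auto
      ultimately show ?thesis using True ni S PJ unfolding Bv_def S'_def by auto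
    next
      case False
      then show ?thesis using S PJ unfolding Bv_def S'_def by auto
    qed
    finally show ?thesis using e1 by (simp add: S'_def)
  qed
qed

lemma InnerF_simp:
  assumes i: "0 \<le> i" "i \<le> 2 * int k"
  shows "InnerF k i = (\<Sum>j\<in>{0..int k}. alpha (int k) j *
     (\<Sum>p\<in>{0..int k - j}. real (assoc_stirling (nat (p + int k - j)) (nat p)) * Bv k p j i))"
proof -
  define K where "K = int k"
  define A where "A j p = real (assoc_stirling (nat (p + K - j)) (nat p))" for j p
  have "InnerF k i = (\<Sum>j\<in>{0..U i K}. alpha K j * (\<Sum>p\<in>{L i K..K - j}. A j p *
      (\<Sum>b\<in>{0..j}. kbinom p b * kbinom K (j - b) * kbinom b (K + p - i))))"
    unfolding InnerF_def K_def A_def ..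
  also have "\<dots> = (\<Sum>j\<in>{0..U i K}. alpha K j * (\<Sum>p\<in>{L i K..K - j}. A j p * Bv k p j i))"
  proof (rule sum.cong[OF refl])
    fix j assume j: "j \<in> {0..U i K}"
    have "(\<Sum>p\<in>{L i K..K - j}. A j p * (\<Sum>b\<in>{0..j}. kbinom p b * kbinom K (j - b) * kbinom b (K + p - i)))
        = (\<Sum>p\<in>{L i K..K - j}. A j p * Bv k p j i)"
    proof (rule sum.cong[OF refl])
      fix p assume p: "p \<in> {L i K..K - j}"
      have "0 \<le> p" using p by (auto simp: L_def)
      moreover have "0 \<le> j" using j by simp
      ultimately have "(\<Sum>b\<in>{0..j}. kbinom p b * kbinom K (j - b) * kbinom b (K + p - i)) = Bv k p j i"
        unfolding K_def using Bsum_int i(1) by blast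
      then show "A j p * (\<Sum>b\<in>{0..j}. kbinom p b * kbinom K (j - b) * kbinom b (K + p - i)) = A j p * Bv k p j i"
        by simp
    qed
    then show "alpha K j * (\<Sum>p\<in>{L i K..K - j}. A j p * (\<Sum>b\<in>{0..j}. kbinom p b * kbinom K (j - b) * kbinom b (K + p - i)))
        = alpha K j * (\<Sum>p\<in>{L i K..K - j}. A j p * Bv k p j i)" by simp
  qed
  also have "\<dots> = (\<Sum>j\<in>{0..U i K}. alpha K j * (\<Sum>p\<in>{0..K - j}. A j p * Bv k p j i))"
  proof (rule sum.cong[OF refl])
    fix j assume j: "j \<in> {0..U i K}"
    have "(\<Sum>p\<in>{L i K..K - j}. A j p * Bv k p j i) = (\<Sum>p\<in>{0..K - j}. A j p * Bv k p j i)"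
    proof (rule sum.mono_neutral_left)
      show "{L i K..K - j} \<subseteq> {0..K - j}" by (auto simp: L_def)
      show "\<forall>p\<in>{0..K - j} - {L i K..K - j}. A j p * Bv k p j i = 0"
      proof
        fix p assume "p \<in> {0..K - j} - {L i K..K - j}"
        then have "p < i - K" using j by (auto simp: L_def)
        then show "A j p * Bv k p j i = 0" by (simp add: Bv_def K_def)
      qed
    qed simp
    then show "alpha K j * (\<Sum>p\<in>{L i K..K - j}. A j p * Bv k p j i) = alpha K j * (\<Sum>p\<in>{0..K - j}. A j p * Bv k p j i)"
      by simp
  qed
  also have "\<dots> = (\<Sum>j\<in>{0..K}. alpha K j * (\<Sum>p\<in>{0..K - j}. A j p * Bv k p j i))"
  proof (rule sum.mono_neutral_left)
    have "U i K \<le> K"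
    proof -
      have "\<lceil>real_of_int K / 2\<rceil> \<le> K" using K_def by (simp add: ceiling_le_iff)
      then show ?thesis by (simp add: U_def)
    qed
    then show "{0..U i K} \<subseteq> {0..K}" by auto
    show "\<forall>j\<in>{0..K} - {0..U i K}. alpha K j * (\<Sum>p\<in>{0..K - j}. A j p * Bv k p j i) = 0"
    proof
      fix j assume j: "j \<in> {0..K} - {0..U i K}"
      then have "j > U i K" "0 \<le> j" "j \<le> K" by auto
      then have "\<lceil>real_of_int K / 2\<rceil> < j \<or> 2 * K - i < j" by (auto simp: U_def)
      then show "alpha K j * (\<Sum>p\<in>{0..K - j}. A j p * Bv k p j i) = 0"
      proof
        assume "\<lceil>real_of_int K / 2\<rceil> < j"
        then have "alpha K j = 0" using alpha_zero[of K j] \<open>j \<le> K\<close> K_def by simp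
        then show ?thesis by simp
      next
        assume "2 * K - i < j"
        then have "Bv k p j i = 0" if "p \<in> {0..K - j}" for p using that by (auto simp: Bv_def K_def)
        then show ?thesis by simp
      qed
    qed
  qed simp
  finally show ?thesis unfolding K_def A_def .
qed


lemma E4:
  assumes j: "0 \<le> j" "j \<le> int k" and p: "0 \<le> p" "p \<le> int k - j"
  shows "(\<Sum>i\<in>{0..2 * int k}. real (m choose nat i) * Bv k p j i) =
         real ((m choose nat (p + int k - j)) * ((m - nat (int k - j)) choose nat j))"
proof -
  define K where "K = int k"
  define g where "g i = real (m choose nat i) * Bv k p j i" for i
  obtain P J where PJ: "p = int P" "j = int J" using p j by (metis nonneg_eq_int)
  have JK: "J \<le> k" "P + J \<le> k" using j p PJ by auto
  have "(\<Sum>i\<in>{0..2 * K}. g i) = (\<Sum>i\<in>{K + p - j..K + p}. g i)"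
  proof (rule sum.mono_neutral_right)
    show "{K + p - j..K + p} \<subseteq> {0..2 * K}" using j p K_def by auto
    show "\<forall>i\<in>{0..2 * K} - {K + p - j..K + p}. g i = 0"
      by (auto simp: g_def Bv_def K_def)
  qed simp
  also have "\<dots> = (\<Sum>s\<in>{0..j}. g (K + p - s))"
  proof -
    have "(\<lambda>s. K + p - s) ` {0..j} = {K + p - j..K + p}"
    proof
      show "(\<lambda>s. K + p - s) ` {0..j} \<subseteq> {K + p - j..K + p}" by auto
      show "{K + p - j..K + p} \<subseteq> (\<lambda>s. K + p - s) ` {0..j}"
      proof
        fix i assume "i \<in> {K + p - j..K + p}"
        then have "K + p - i \<in> {0..j}" "i = K + p - (K + p - i)" by auto
        then show "i \<in> (\<lambda>s. K + p - s) ` {0..j}" by blast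
      qed
    qed
    moreover have "inj_on (\<lambda>s. K + p - s) {0..j}" by (auto simp: inj_on_def)
    ultimately have "sum g {K + p - j..K + p} = sum (g \<circ> (\<lambda>s. K + p - s)) {0..j}" by (metis sum.reindex)
    then show ?thesis by (simp add: comp_def)
  qed
  also have "\<dots> = (\<Sum>S\<le>J. g (K + p - int S))"
    unfolding PJ(2) by (rule sum_int_nat)
  also have "\<dots> = real (\<Sum>S\<le>J. (m choose ((P + k - J) + J - S)) * (P choose S) * (((P + k - J) + J - S) choose (J - S)))"
  proof -
    have "g (K + p - int S) = real ((m choose ((P + k - J) + J - S)) * (P choose S) * (((P + k - J) + J - S) choose (J - S)))"
      if "S \<le> J" for S
    proof -
      have e1: "nat (K + p - int S) = (P + k - J) + J - S" using that JK PJ K_def by auto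
      have e2: "nat (j - int S) = J - S" using that PJ by auto
      show ?thesis using that PJ unfolding g_def Bv_def K_def e1[unfolded K_def]
        by (simp add: e2 nat_diff_distrib')
    qed
    then show ?thesis by simp
  qed
  also have "\<dots> = real ((m choose (P + k - J)) * ((m - (P + k - J) + P) choose J))"
    by (simp only: E4nat)
  also have "\<dots> = real ((m choose nat (p + int k - j)) * ((m - nat (int k - j)) choose nat j))"
  proof (cases "P + k - J \<le> m")
    case True
    have "m - (P + k - J) + P = m - (k - J)" using True JK by auto
    moreover have "nat (p + int k - j) = P + k - J" "nat (int k - j) = k - J" "nat j = J" using PJ JK by auto
    ultimately show ?thesis by simp
  next
    case False
    moreover have "nat (p + int k - j) = P + k - J" using PJ JK by auto
    ultimately show ?thesis by (simp add: binomial_eq_0)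
  qed
  finally show ?thesis unfolding g_def K_def .
qed


theorem E_main:
  "(\<Sum>d\<in>{0..2 * int k}. c_coef d (int k) * real m ^ nat d) =
   (\<Sum>j\<in>{0..int k}. alpha (int k) j * real ((m - nat (int k - j)) choose nat j) * real (AX m (nat (int k - j))))"
proof -
  define K where "K = int k"
  define A where "A j p = real (assoc_stirling (nat (p + K - j)) (nat p))" for j p
  define c where "c i = real (m choose nat i)" for i
  have "(\<Sum>d\<in>{0..2 * int k}. c_coef d (int k) * real m ^ nat d) = (\<Sum>i\<in>{0..2 * K}. c i * InnerF k i)"
    unfolding E_step1 K_def c_def ..
  also have "\<dots> = (\<Sum>i\<in>{0..2 * K}. c i * (\<Sum>j\<in>{0..K}. alpha K j * (\<Sum>p\<in>{0..K - j}. A j p * Bv k p j i)))"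
    by (rule sum.cong[OF refl]) (simp add: InnerF_simp K_def A_def)
  also have "\<dots> = (\<Sum>i\<in>{0..2 * K}. \<Sum>j\<in>{0..K}. \<Sum>p\<in>{0..K - j}. alpha K j * (A j p * (c i * Bv k p j i)))"
    by (simp add: sum_distrib_left mult_ac)
  also have "\<dots> = (\<Sum>j\<in>{0..K}. \<Sum>i\<in>{0..2 * K}. \<Sum>p\<in>{0..K - j}. alpha K j * (A j p * (c i * Bv k p j i)))"
    by (rule sum.swap)
  also have "\<dots> = (\<Sum>j\<in>{0..K}. \<Sum>p\<in>{0..K - j}. \<Sum>i\<in>{0..2 * K}. alpha K j * (A j p * (c i * Bv k p j i)))"
    by (rule sum.cong[OF refl]) (rule sum.swap)
  also have "\<dots> = (\<Sum>j\<in>{0..K}. alpha K j * (\<Sum>p\<in>{0..K - j}. A j p * (\<Sum>i\<in>{0..2 * K}. c i * Bv k p j i)))"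
    by (simp add: sum_distrib_left)
  also have "\<dots> = (\<Sum>j\<in>{0..K}. alpha K j * (\<Sum>p\<in>{0..K - j}. A j p *
        real ((m choose nat (p + K - j)) * ((m - nat (K - j)) choose nat j))))"
  proof (rule sum.cong[OF refl])
    fix j assume j: "j \<in> {0..K}"
    have "(\<Sum>p\<in>{0..K - j}. A j p * (\<Sum>i\<in>{0..2 * K}. c i * Bv k p j i)) =
        (\<Sum>p\<in>{0..K - j}. A j p * real ((m choose nat (p + K - j)) * ((m - nat (K - j)) choose nat j)))"
    proof (rule sum.cong[OF refl])
      fix p assume p: "p \<in> {0..K - j}"
      show "A j p * (\<Sum>i\<in>{0..2 * K}. c i * Bv k p j i) = A j p * real ((m choose nat (p + K - j)) * ((m - nat (K - j)) choose nat j))"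
        using E4[of j k p m] j p unfolding K_def c_def by simp
    qed
    then show "alpha K j * (\<Sum>p\<in>{0..K - j}. A j p * (\<Sum>i\<in>{0..2 * K}. c i * Bv k p j i)) =
        alpha K j * (\<Sum>p\<in>{0..K - j}. A j p * real ((m choose nat (p + K - j)) * ((m - nat (K - j)) choose nat j)))"
      by simp
  qed
  also have "\<dots> = (\<Sum>j\<in>{0..K}. alpha K j * real ((m - nat (K - j)) choose nat j) * real (AX m (nat (K - j))))"
  proof (rule sum.cong[OF refl])
    fix j assume j: "j \<in> {0..K}"
    define N where "N = nat (K - j)"
    have KjN: "K - j = int N" using j by (simp add: N_def)
    have "(\<Sum>p\<in>{0..K - j}. A j p * real ((m choose nat (p + K - j)) * ((m - nat (K - j)) choose nat j)))
        = (\<Sum>q\<le>N. A j (int q) * real ((m choose nat (int q + K - j)) * ((m - N) choose nat j)))"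
      unfolding KjN nat_int by (rule sum_int_nat)
    also have "\<dots> = real ((m - N) choose nat j) * real (AX m N)"
    proof -
      have "nat (int q + K - j) = q + N" for q using KjN by auto
      then show ?thesis by (simp add: AX_def A_def sum_distrib_left mult_ac)
    qed
    finally show "alpha K j * (\<Sum>p\<in>{0..K - j}. A j p * real ((m choose nat (p + K - j)) * ((m - nat (K - j)) choose nat j))) =
        alpha K j * real ((m - nat (K - j)) choose nat j) * real (AX m (nat (K - j)))"
      by (simp add: N_def)
  qed
  finally show ?thesis unfolding K_def .
qed

lemma sum_reflect:
  fixes g :: "nat \<Rightarrow> 'a::comm_monoid_add"
  shows "(\<Sum>i\<le>k. g (k - i)) = (\<Sum>i\<le>k. g i)"
  using sum.nat_diff_reindex[of g "Suc k"] by (simp add: lessThan_Suc_atMost)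

lemma om_sum_nat:
  assumes "J \<le> k"
  shows "(\<Sum>a\<le>k. om 1 (int a) (int (k - a)) (int J)) = int ((k - J choose J) * 2 ^ (k - J - J) +
      (if J = 0 then 0 else (k - J choose (J - 1)) * 2 ^ (k - J - (J - 1))))"
proof -
  define N where "N = k - J"
  have "(\<Sum>a\<le>k. om 1 (int a) (int (k - a)) (int J)) =
      (\<Sum>a\<le>k. int (if J \<le> a then (k - J choose (a - J)) * (Suc (k - a) choose J) else 0))"
  proof (rule sum.cong[OF refl])
    fix a assume "a \<in> {..k}"
    then have "a + (k - a) - J = k - J" by simp
    then show "om 1 (int a) (int (k - a)) (int J) = int (if J \<le> a then (k - J choose (a - J)) * (Suc (k - a) choose J) else 0)"
      by (simp add: om_nat)
  qed
  also have "\<dots> = (\<Sum>b\<le>k. int (if J \<le> k - b then (k - J choose (k - b - J)) * (Suc b choose J) else 0))"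
  proof -
    have "(\<Sum>b\<le>k. int (if J \<le> k - b then (k - J choose (k - b - J)) * (Suc (k - (k - b)) choose J) else 0)) =
        (\<Sum>a\<le>k. int (if J \<le> a then (k - J choose (a - J)) * (Suc (k - a) choose J) else 0))"
      by (rule sum_reflect)
    moreover have "(\<Sum>b\<le>k. int (if J \<le> k - b then (k - J choose (k - b - J)) * (Suc (k - (k - b)) choose J) else 0)) =
        (\<Sum>b\<le>k. int (if J \<le> k - b then (k - J choose (k - b - J)) * (Suc b choose J) else 0))"
      by (rule sum.cong[OF refl]) auto
    ultimately show ?thesis by simp
  qed
  also have "\<dots> = (\<Sum>b\<le>N. int ((N choose b) * (Suc b choose J)))"
  proof -
    have "(\<Sum>b\<le>k. int (if J \<le> k - b then (k - J choose (k - b - J)) * (Suc b choose J) else 0)) =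
        (\<Sum>b\<le>N. int (if J \<le> k - b then (k - J choose (k - b - J)) * (Suc b choose J) else 0))"
      by (rule sum.mono_neutral_right) (auto simp: N_def)
    also have "\<dots> = (\<Sum>b\<le>N. int ((N choose b) * (Suc b choose J)))"
    proof (rule sum.cong[OF refl])
      fix b assume "b \<in> {..N}"
      then have "b \<le> N" by simp
      then have "J \<le> k - b" "k - b - J = N - b" using assms by (auto simp: N_def)
      moreover have "(N choose (N - b)) = (N choose b)" using \<open>b \<le> N\<close> by (rule binomial_symmetric[symmetric])
      ultimately show "int (if J \<le> k - b then (k - J choose (k - b - J)) * (Suc b choose J) else 0) = int ((N choose b) * (Suc b choose J))"
        by (simp add: N_def)
    qed
    finally show ?thesis .
  qed
  also have "\<dots> = int ((N choose J) * 2 ^ (N - J) + (if J = 0 then 0 else (N choose (J - 1)) * 2 ^ (N - (J - 1))))"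
  proof -
    have nateq: "(\<Sum>b\<le>N. (N choose b) * (Suc b choose J)) = (N choose J) * 2 ^ (N - J) + (if J = 0 then 0 else (N choose (J - 1)) * 2 ^ (N - (J - 1)))"
    proof (cases J)
      case 0
      then show ?thesis using T_sum[of N 0] by simp
    next
      case (Suc J')
      have "(\<Sum>b\<le>N. (N choose b) * (Suc b choose J)) = (\<Sum>b\<le>N. (N choose b) * (b choose J)) + (\<Sum>b\<le>N. (N choose b) * (b choose J'))"
        unfolding Suc by (simp add: sum.distrib algebra_simps)
      then have "(\<Sum>b\<le>N. (N choose b) * (Suc b choose J)) = (N choose J) * 2 ^ (N - J) + (N choose J') * 2 ^ (N - J')"
        by (simp only: T_sum)
      then show ?thesis using Suc by simp
    qed
    show ?thesis by (simp only: of_nat_sum[symmetric] nateq)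
  qed
  finally show ?thesis by (simp add: N_def)
qed

lemma om_sum_alpha:
  assumes "J \<le> k"
  shows "real_of_int (\<Sum>a\<le>k. om 1 (int a) (int (k - a)) (int J)) = alpha (int k) (int J) / fact J"
proof -
  define N where "N = k - J"
  have kNJ: "k = N + J" using assms by (simp add: N_def)
  have lhs: "real_of_int (\<Sum>a\<le>k. om 1 (int a) (int (k - a)) (int J)) =
      real (N choose J) * 2 ^ (N - J) + (if J = 0 then 0 else real (N choose (J - 1)) * 2 ^ (N - (J - 1)))"
    unfolding om_sum_nat[OF assms] N_def by simp
  have al: "alpha (int k) (int J) / fact J = 2 powi (int k - 2 * int J) * (kbinom (int N) (int J - 1) + kbinom (int N + 1) (int J))"
    unfolding alpha_def using kNJ by (simp add: of_nat_diff)
  show ?thesis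
  proof (cases J)
    case 0
    have "kbinom (int N + 1) 0 = 1" by (simp add: kbinom_def)
    then show ?thesis using lhs al kNJ 0 by (simp add: kb_negr)
  next
    case (Suc J')
    have kb1: "kbinom (int N) (int J - 1) = real (N choose J')" using Suc kb_nat by simp
    have kb2: "kbinom (int N + 1) (int J) = real (N choose J') + real (N choose J)"
      using Suc kb_nat[of "Suc N" J] by (simp add: add.commute)
    have "real (N choose J) * 2 ^ (N - J) + real (N choose J') * 2 ^ (N - J')
        = 2 powi (int k - 2 * int J) * (2 * real (N choose J') + real (N choose J))"
    proof (cases "J \<le> N")
      case True
      have e1: "(2::real) ^ (N - J) = 2 powi (int k - 2 * int J)"
        using True kNJ by (simp add: power_int_def nat_diff_distrib)
      have h: "N - J' = Suc (N - J)" using True Suc by simp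
      have e2: "(2::real) ^ (N - J') = 2 * 2 powi (int k - 2 * int J)"
        unfolding h using e1 by simp
      show ?thesis unfolding e1 e2 by (simp add: algebra_simps)
    next
      case False
      then have cJ: "N choose J = 0" by (simp add: binomial_eq_0)
      show ?thesis
      proof (cases "J' = N")
        case True
        then have "int k - 2 * int J = -1" using kNJ Suc by simp
        then show ?thesis using cJ True by (simp add: power_int_minus)
      next
        case False
        then have "N choose J' = 0" using \<open>\<not> J \<le> N\<close> Suc by (simp add: binomial_eq_0)
        then show ?thesis using cJ \<open>\<not> J \<le> N\<close> False Suc by (simp add: binomial_eq_0)
      qed
    qed
    then show ?thesis using lhs al kb1 kb2 Suc by simp
  qed
qed


theorem theorem3p3:
  fixes m k :: nat
  shows "real (A_S m k) = (\<Sum>d\<in>{0..2 * int k}. c_coef d (int k) * real m ^ nat d)"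
proof -
  define K where "K = int k"
  define w where "w j = real_of_int (\<Sum>a\<le>k. om 1 (int a) (int (k - a)) j)" for j
  define T where "T j = w j * real_of_int (Psi m (K - j) j)" for j
  have "real (A_S m k) = real_of_int (int (A_S m k))" by simp
  also have "\<dots> = (\<Sum>a\<le>k. real_of_int (Wr m 1 (int a) (int (k - a))))"
    unfolding AS_Wr by simp
  also have "\<dots> = (\<Sum>a\<le>k. \<Sum>j\<in>{0..int m}. real_of_int (om 1 (int a) (int (k - a)) j) * real_of_int (Psi m (K - j) j))"
  proof (rule sum.cong[OF refl])
    fix a assume "a \<in> {..k}"
    then have "int a + int (k - a) = K" by (simp add: K_def)
    then show "real_of_int (Wr m 1 (int a) (int (k - a))) =
        (\<Sum>j\<in>{0..int m}. real_of_int (om 1 (int a) (int (k - a)) j) * real_of_int (Psi m (K - j) j))"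
      unfolding Wr_closed by simp
  qed
  also have "\<dots> = (\<Sum>j\<in>{0..int m}. T j)"
    unfolding T_def w_def by (subst sum.swap) (simp add: sum_distrib_right)
  also have "\<dots> = (\<Sum>j\<in>{0..int m + K}. T j)"
    by (rule sum.mono_neutral_left) (auto simp: T_def Psi_large K_def)
  also have "\<dots> = (\<Sum>j\<in>{0..K}. T j)"
    by (rule sum.mono_neutral_right) (auto simp: T_def Psi_negN K_def)
  also have "\<dots> = (\<Sum>j\<in>{0..K}. alpha K j * real ((m - nat (K - j)) choose nat j) * real (AX m (nat (K - j))))"
  proof (rule sum.cong[OF refl])
    fix j assume j: "j \<in> {0..K}"
    then obtain J where J: "j = int J" "J \<le> k" by (metis K_def atLeastAtMost_iff nonneg_eq_int of_nat_le_iff)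
    define N where "N = k - J"
    have KJ: "K - j = int N" "nat (K - j) = N" using J by (auto simp: K_def N_def)
    have wJ: "w j = alpha K j / fact J" unfolding w_def J K_def using om_sum_alpha[OF J(2)] by simp
    have "real_of_int (Psi m (int N) (int J)) = real (AX m N) * real ((m - N) choose J) * fact J"
      by (simp add: Psi_def AX_Stirling ffa_def)
    then have "real_of_int (Psi m (K - j) j) = real (AX m N) * real ((m - N) choose J) * fact J"
      using KJ(1) J(1) by simp
    then show "T j = alpha K j * real ((m - nat (K - j)) choose nat j) * real (AX m (nat (K - j)))"
      unfolding T_def wJ KJ(2) using J by simp
  qed
  also have "\<dots> = (\<Sum>d\<in>{0..2 * int k}. c_coef d (int k) * real m ^ nat d)"
    unfolding E_main K_def ..
  finally show ?thesis .
qed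

end
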